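(* Let $G$ be an arc-transitive group of automorphisms of a connected symmetric graph $X=X_0$, and let $X_2\xrightarrow{\wp_2}X_1\xrightarrow{\wp_1}X_0$ be a $G$-admissible chain of two consecutive $2$-covers, with lifted groups $G=G_0$, $G_1$, $G_2$. If $\wp_2$ is split-transitive (respectively, split-sectional) relative to $G_1$, then there exists a $G$-admissible chain $X_2\xrightarrow{\wp_2'}X_1'\xrightarrow{\wp_1'}X_0$ of two consecutive $2$-covers such that $\wp_1'$ is split-transitive (respectively, split-sectional) relative to $G$.
   Context: Graphs are finite, simple and connected; maps are composed on the right. A regular covering projection $\wp\colon\tilde Y\to Y$ is a surjective graph homomorphism, locally bijective on neighbourhoods, whose group $\mathrm{CT}(\wp)$ of covering transformations (automorphisms $c$ with $c\wp=\wp$) acts regularly on fibres; a $2$-cover has $\mathrm{CT}(\wp)\cong\mathbb{Z}_2$. A lift of $g\in\mathrm{Aut}\,Y$ is $\tilde g$ with $\wp g=\tilde g\wp$; if all elements of $K\leq\mathrm{Aut}\,Y$ lift, the lifted group $\tilde K$ is the group of all lifts. $\wp$ is $K$-split if $\mathrm{CT}(\wp)$ has a complement in $\tilde K$. A section is a vertex set meeting each fibre in exactly one vertex; a complement is sectional if it leaves some section invariant and transitive if it is transitive on $V(\tilde Y)$. For $K$ vertex-transitive, $\wp$ is split-sectional (resp. split-transitive) relative to $K$ if it is $K$-split and all complements of $\mathrm{CT}(\wp)$ in $\tilde K$ are sectional (resp. transitive). A chain $X_n\xrightarrow{\wp_n}\cdots\xrightarrow{\wp_1}X_0$ of consecutive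 $2$-covers is $G$-admissible if there are $G=G_0,G_1,\dots,G_n$ with $G_j\leq\mathrm{Aut}\,X_j$ the lift of $G_{j-1}$ along $\wp_j$. *)

theory Defs
  imports Main
begin

definition graph :: "'a set \<Rightarrow> ('a \<Rightarrow> 'a \<Rightarrow> bool) \<Rightarrow> bool" where
  "graph V E \<longleftrightarrow> finite V \<and> V \<noteq> {} \<and>
     (\<forall>x y. E x y \<longrightarrow> x \<in> V \<and> y \<in> V) \<and>
     (\<forall>x y. E x y \<longrightarrow> E y x) \<and> (\<forall>x. \<not> E x x) \<and>
     (\<forall>x\<in>V. \<forall>y\<in>V. E\<^sup>*\<^sup>* x y)"

definition Aut :: "'a set \<Rightarrow> ('a \<Rightarrow> 'a \<Rightarrow> bool) \<Rightarrow> ('a \<Rightarrow> 'a) set" where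
  "Aut V E = {f. bij_betw f V V \<and> (\<forall>x\<in>V. \<forall>y\<in>V. E (f x) (f y) \<longleftrightarrow> E x y)
                 \<and> (\<forall>x. x \<notin> V \<longrightarrow> f x = x)}"

definition aut_group :: "'a set \<Rightarrow> ('a \<Rightarrow> 'a \<Rightarrow> bool) \<Rightarrow> ('a \<Rightarrow> 'a) set \<Rightarrow> bool" where
  "aut_group V E K \<longleftrightarrow> K \<subseteq> Aut V E \<and> id \<in> K \<and>
     (\<forall>f\<in>K. \<forall>g\<in>K. f \<circ> g \<in> K) \<and> (\<forall>f\<in>K. inv f \<in> K)"

definition arc_transitive :: "'a set \<Rightarrow> ('a \<Rightarrow> 'a \<Rightarrow> bool) \<Rightarrow> ('a \<Rightarrow> 'a) set \<Rightarrow> bool" where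
  "arc_transitive V E G \<longleftrightarrow> aut_group V E G \<and>
     (\<forall>u v x y. E u v \<longrightarrow> E x y \<longrightarrow> (\<exists>g\<in>G. g u = x \<and> g v = y))"

definition covering :: "'b set \<Rightarrow> ('b \<Rightarrow> 'b \<Rightarrow> bool) \<Rightarrow> 'a set \<Rightarrow> ('a \<Rightarrow> 'a \<Rightarrow> bool)
    \<Rightarrow> ('b \<Rightarrow> 'a) \<Rightarrow> bool" where
  "covering V' E' V E p \<longleftrightarrow> graph V' E' \<and> graph V E \<and> p ` V' = V \<and>
     (\<forall>x y. E' x y \<longrightarrow> E (p x) (p y)) \<and>
     (\<forall>x\<in>V'. bij_betw p {y. E' x y} {z. E (p x) z})"

definition CT :: "'b set \<Rightarrow> ('b \<Rightarrow> 'b \<Rightarrow> bool) \<Rightarrow> ('b \<Rightarrow> 'a) \<Rightarrow> ('b \<Rightarrow> 'b) set" where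
  "CT V' E' p = {c \<in> Aut V' E'. \<forall>x\<in>V'. p (c x) = p x}"

definition regular_covering :: "'b set \<Rightarrow> ('b \<Rightarrow> 'b \<Rightarrow> bool) \<Rightarrow> 'a set \<Rightarrow> ('a \<Rightarrow> 'a \<Rightarrow> bool)
    \<Rightarrow> ('b \<Rightarrow> 'a) \<Rightarrow> bool" where
  "regular_covering V' E' V E p \<longleftrightarrow> covering V' E' V E p \<and>
     (\<forall>x1\<in>V'. \<forall>x2\<in>V'. p x1 = p x2 \<longrightarrow> (\<exists>!c. c \<in> CT V' E' p \<and> c x1 = x2))"

definition two_cover :: "'b set \<Rightarrow> ('b \<Rightarrow> 'b \<Rightarrow> bool) \<Rightarrow> 'a set \<Rightarrow> ('a \<Rightarrow> 'a \<Rightarrow> bool)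
    \<Rightarrow> ('b \<Rightarrow> 'a) \<Rightarrow> bool" where
  "two_cover V' E' V E p \<longleftrightarrow> regular_covering V' E' V E p \<and> card (CT V' E' p) = 2"

text \<open>h is a lift of g (maps composed on the right: p g = h p).\<close>
definition is_lift :: "'b set \<Rightarrow> ('b \<Rightarrow> 'a) \<Rightarrow> ('a \<Rightarrow> 'a) \<Rightarrow> ('b \<Rightarrow> 'b) \<Rightarrow> bool" where
  "is_lift V' p g h \<longleftrightarrow> (\<forall>x\<in>V'. g (p x) = p (h x))"

definition all_lift :: "'b set \<Rightarrow> ('b \<Rightarrow> 'b \<Rightarrow> bool) \<Rightarrow> ('b \<Rightarrow> 'a) \<Rightarrow> ('a \<Rightarrow> 'a) set \<Rightarrow> bool" where
  "all_lift V' E' p K \<longleftrightarrow> (\<forall>g\<in>K. \<exists>h\<in>Aut V' E'. is_lift V' p g h)"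

definition lifted_group :: "'b set \<Rightarrow> ('b \<Rightarrow> 'b \<Rightarrow> bool) \<Rightarrow> ('b \<Rightarrow> 'a) \<Rightarrow> ('a \<Rightarrow> 'a) set
    \<Rightarrow> ('b \<Rightarrow> 'b) set" where
  "lifted_group V' E' p K = {h \<in> Aut V' E'. \<exists>g\<in>K. is_lift V' p g h}"

definition complement :: "'b set \<Rightarrow> ('b \<Rightarrow> 'b \<Rightarrow> bool) \<Rightarrow> ('b \<Rightarrow> 'a) \<Rightarrow> ('a \<Rightarrow> 'a) set
    \<Rightarrow> ('b \<Rightarrow> 'b) set \<Rightarrow> bool" where
  "complement V' E' p K H \<longleftrightarrow> aut_group V' E' H \<and> H \<subseteq> lifted_group V' E' p K \<and>
     H \<inter> CT V' E' p = {id} \<and>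
     {h \<circ> c | h c. h \<in> H \<and> c \<in> CT V' E' p} = lifted_group V' E' p K"

definition split :: "'b set \<Rightarrow> ('b \<Rightarrow> 'b \<Rightarrow> bool) \<Rightarrow> ('b \<Rightarrow> 'a) \<Rightarrow> ('a \<Rightarrow> 'a) set \<Rightarrow> bool" where
  "split V' E' p K \<longleftrightarrow> (\<exists>H. complement V' E' p K H)"

definition is_section :: "'b set \<Rightarrow> 'a set \<Rightarrow> ('b \<Rightarrow> 'a) \<Rightarrow> 'b set \<Rightarrow> bool" where
  "is_section V' V p S \<longleftrightarrow> S \<subseteq> V' \<and> (\<forall>y\<in>V. card (S \<inter> {x\<in>V'. p x = y}) = 1)"

definition sectional :: "'b set \<Rightarrow> 'a set \<Rightarrow> ('b \<Rightarrow> 'a) \<Rightarrow> ('b \<Rightarrow> 'b) set \<Rightarrow> bool" where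
  "sectional V' V p H \<longleftrightarrow> (\<exists>S. is_section V' V p S \<and> (\<forall>h\<in>H. h ` S = S))"

definition transitive_on :: "'b set \<Rightarrow> ('b \<Rightarrow> 'b) set \<Rightarrow> bool" where
  "transitive_on V' H \<longleftrightarrow> (\<forall>x\<in>V'. \<forall>y\<in>V'. \<exists>h\<in>H. h x = y)"

definition split_sectional :: "'b set \<Rightarrow> ('b \<Rightarrow> 'b \<Rightarrow> bool) \<Rightarrow> 'a set \<Rightarrow> ('b \<Rightarrow> 'a)
    \<Rightarrow> ('a \<Rightarrow> 'a) set \<Rightarrow> bool" where
  "split_sectional V' E' V p K \<longleftrightarrow> split V' E' p K \<and>
     (\<forall>H. complement V' E' p K H \<longrightarrow> sectional V' V p H)"

definition split_transitive :: "'b set \<Rightarrow> ('b \<Rightarrow> 'b \<Rightarrow> bool) \<Rightarrow> ('b \<Rightarrow> 'a)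
    \<Rightarrow> ('a \<Rightarrow> 'a) set \<Rightarrow> bool" where
  "split_transitive V' E' p K \<longleftrightarrow> split V' E' p K \<and>
     (\<forall>H. complement V' E' p K H \<longrightarrow> transitive_on V' H)"

definition admissible2 ::
  "'c set \<Rightarrow> ('c \<Rightarrow> 'c \<Rightarrow> bool) \<Rightarrow> ('c \<Rightarrow> 'b) \<Rightarrow>
   'b set \<Rightarrow> ('b \<Rightarrow> 'b \<Rightarrow> bool) \<Rightarrow> ('b \<Rightarrow> 'a) \<Rightarrow>
   'a set \<Rightarrow> ('a \<Rightarrow> 'a \<Rightarrow> bool) \<Rightarrow>
   ('a \<Rightarrow> 'a) set \<Rightarrow> ('b \<Rightarrow> 'b) set \<Rightarrow> ('c \<Rightarrow> 'c) set \<Rightarrow> bool" where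
  "admissible2 V2 E2 p2 V1 E1 p1 V0 E0 G G1 G2 \<longleftrightarrow>
     two_cover V1 E1 V0 E0 p1 \<and> two_cover V2 E2 V1 E1 p2 \<and>
     aut_group V0 E0 G \<and>
     all_lift V1 E1 p1 G \<and> G1 = lifted_group V1 E1 p1 G \<and>
     all_lift V2 E2 p2 G1 \<and> G2 = lifted_group V2 E2 p2 G1"

end

theory Submission
  imports Defs
begin

lemma graph_edge: "graph V E \<Longrightarrow> E x y \<Longrightarrow> x \<in> V \<and> y \<in> V"
  by (simp add: graph_def)

lemma Aut_mem: "f \<in> Aut V E \<Longrightarrow> x \<in> V \<Longrightarrow> f x \<in> V"
  unfolding Aut_def bij_betw_def by auto

lemma Aut_out: "f \<in> Aut V E \<Longrightarrow> x \<notin> V \<Longrightarrow> f x = x"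
  unfolding Aut_def by auto

lemma Aut_bij: assumes "f \<in> Aut V E" shows "bij f"
proof -
  have b: "bij_betw f V V" and o: "\<And>x. x \<notin> V \<Longrightarrow> f x = x" using assms unfolding Aut_def by auto
  have "inj f"
  proof (rule injI)
    fix x y assume e: "f x = f y"
    show "x = y"
    proof (cases "x \<in> V"; cases "y \<in> V")
      assume "x \<in> V" "y \<in> V" then show ?thesis using b e by (auto simp: bij_betw_def inj_on_def)
    next
      assume "x \<in> V" "y \<notin> V" then show ?thesis using b e o[of y] by (auto simp: bij_betw_def)
    next
      assume "x \<notin> V" "y \<in> V" then show ?thesis using b e o[of x] by (auto simp: bij_betw_def)
    next
      assume "x \<notin> V" "y \<notin> V" then show ?thesis using e o by auto
    qed
  qed
  moreover have "surj f"
  proof -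
    { fix y have "y \<in> range f"
      proof (cases "y \<in> V")
        case True then show ?thesis using b by (auto simp: bij_betw_def)
      next
        case False then show ?thesis using o[of y] by (metis rangeI)
      qed }
    then show ?thesis by auto
  qed
  ultimately show ?thesis by (simp add: bij_def)
qed

lemma Aut_inv1: "f \<in> Aut V E \<Longrightarrow> inv f (f x) = x"
  using Aut_bij bij_is_inj inv_f_f by metis

lemma Aut_inv2: "f \<in> Aut V E \<Longrightarrow> f (inv f x) = x"
  using Aut_bij bij_is_surj surj_f_inv_f by metis

lemma Aut_inj: "f \<in> Aut V E \<Longrightarrow> f x = f y \<Longrightarrow> x = y"
  by (metis Aut_inv1)

lemma Aut_edge: assumes "graph V E" "f \<in> Aut V E" shows "E (f x) (f y) \<longleftrightarrow> E x y"
proof (cases "x \<in> V \<and> y \<in> V")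
  case True then show ?thesis using assms unfolding Aut_def by auto
next
  case False
  then have "x \<notin> V \<or> y \<notin> V" by auto
  then have "f x \<notin> V \<or> f y \<notin> V" using Aut_out[OF assms(2)] by metis
  then show ?thesis using graph_edge[OF assms(1)] False by metis
qed

lemma Aut_id: "id \<in> Aut V E"
  unfolding Aut_def by auto

lemma Aut_comp: assumes "f \<in> Aut V E" "g \<in> Aut V E" shows "f \<circ> g \<in> Aut V E"
proof -
  have "bij_betw (f \<circ> g) V V" using assms unfolding Aut_def using bij_betw_trans by blast
  moreover have "\<forall>x\<in>V. \<forall>y\<in>V. E ((f\<circ>g) x) ((f\<circ>g) y) \<longleftrightarrow> E x y"
    using assms Aut_mem[OF assms(2)] unfolding Aut_def by auto
  moreover have "\<forall>x. x \<notin> V \<longrightarrow> (f\<circ>g) x = x" using assms unfolding Aut_def by auto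
  ultimately show ?thesis unfolding Aut_def by auto
qed

lemma Aut_inv_mem: assumes "f \<in> Aut V E" "x \<in> V" shows "inv f x \<in> V"
proof -
  have "f`V = V" using assms unfolding Aut_def bij_betw_def by auto
  then obtain y where "y \<in> V" "f y = x" using assms(2) by (metis imageE)
  then show ?thesis using Aut_inv1[OF assms(1)] by metis
qed

lemma Aut_inv: assumes "f \<in> Aut V E" shows "inv f \<in> Aut V E"
proof -
  have 1: "bij_betw (inv f) V V"
    unfolding bij_betw_def inj_on_def
  proof (intro conjI ballI impI)
    fix x y assume "x \<in> V" "y \<in> V" "inv f x = inv f y" then show "x = y" by (metis Aut_inv2 assms)
  next
    show "inv f ` V = V"
    proof
      show "inv f ` V \<subseteq> V" using Aut_inv_mem[OF assms] by auto
      show "V \<subseteq> inv f ` V"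
      proof
        fix x assume "x \<in> V"
        then have "f x \<in> V" "inv f (f x) = x" using Aut_mem[OF assms] Aut_inv1[OF assms] by auto
        then show "x \<in> inv f ` V" by (metis image_eqI)
      qed
    qed
  qed
  have 2: "\<forall>x\<in>V. \<forall>y\<in>V. E (inv f x) (inv f y) \<longleftrightarrow> E x y"
  proof (intro ballI)
    fix x y assume "x \<in> V" "y \<in> V"
    then have m: "inv f x \<in> V" "inv f y \<in> V" using Aut_inv_mem[OF assms] by auto
    have "E (f (inv f x)) (f (inv f y)) \<longleftrightarrow> E (inv f x) (inv f y)"
      using assms m unfolding Aut_def by blast
    then show "E (inv f x) (inv f y) \<longleftrightarrow> E x y"
      using Aut_inv2[OF assms] by simp
  qed
  have 3: "\<forall>x. x \<notin> V \<longrightarrow> inv f x = x"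
  proof (intro allI impI)
    fix x assume "x \<notin> V" then have "f x = x" using Aut_out[OF assms] by auto
    then show "inv f x = x" using Aut_inv1[OF assms, of x] by simp
  qed
  show ?thesis using 1 2 3 unfolding Aut_def by auto
qed

lemma covering_graph: "covering V' E' V E p \<Longrightarrow> graph V' E'" by (simp add: covering_def)
lemma covering_graph2: "covering V' E' V E p \<Longrightarrow> graph V E" by (simp add: covering_def)

lemma covering_locinj: assumes "covering V' E' V E p" "x \<in> V'" "E' x y" "E' x z" "p y = p z"
  shows "y = z"
  using assms unfolding covering_def bij_betw_def inj_on_def by auto

lemma ULL:
  assumes cov: "covering V' E' V E p" and f1: "f1 \<in> Aut V' E'" and f2: "f2 \<in> Aut V' E'"
    and pp: "\<forall>x\<in>V'. p (f1 x) = p (f2 x)" and x0: "x0 \<in> V'" and eq: "f1 x0 = f2 x0"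
  shows "f1 = f2"
proof -
  have g: "graph V' E'" using cov by (simp add: covering_def)
  have conn: "\<forall>x\<in>V'. \<forall>y\<in>V'. E'\<^sup>*\<^sup>* x y" using g by (simp add: graph_def)
  have *: "f1 y = f2 y" if "E'\<^sup>*\<^sup>* x0 y" for y
    using that
  proof (induction rule: rtranclp_induct)
    case base then show ?case using eq by simp
  next
    case (step y z)
    have yz: "y \<in> V'" "z \<in> V'" using graph_edge[OF g step.hyps(2)] by auto
    have "E' (f1 y) (f1 z)" "E' (f2 y) (f2 z)" using Aut_edge[OF g f1] Aut_edge[OF g f2] step.hyps(2) by auto
    then have "E' (f1 y) (f1 z)" "E' (f1 y) (f2 z)" using step.IH by auto
    then show ?case using covering_locinj[OF cov Aut_mem[OF f1 yz(1)]] pp yz(2) by blast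
  qed
  show ?thesis
  proof
    fix y show "f1 y = f2 y"
    proof (cases "y \<in> V'")
      case True then show ?thesis using * conn x0 by blast
    next
      case False then show ?thesis using Aut_out f1 f2 by metis
    qed
  qed
qed

lemma CT_id: "id \<in> CT V' E' p" unfolding CT_def using Aut_id by auto

lemma CT_comp: "c \<in> CT V' E' p \<Longrightarrow> d \<in> CT V' E' p \<Longrightarrow> c \<circ> d \<in> CT V' E' p"
proof -
  assume c: "c \<in> CT V' E' p" and d: "d \<in> CT V' E' p"
  then have cA: "c \<in> Aut V' E'" and dA: "d \<in> Aut V' E'" and pc: "\<forall>x\<in>V'. p (c x) = p x"
    and pd: "\<forall>x\<in>V'. p (d x) = p x" unfolding CT_def by auto
  have "c \<circ> d \<in> Aut V' E'" using Aut_comp[OF cA dA] .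
  moreover have "\<forall>x\<in>V'. p ((c \<circ> d) x) = p x"
  proof
    fix x assume x: "x \<in> V'" then have "d x \<in> V'" by (rule Aut_mem[OF dA])
    then show "p ((c \<circ> d) x) = p x" using pc pd x by simp
  qed
  ultimately show ?thesis by (simp add: CT_def)
qed

lemma two_cover_struct:
  assumes tc: "two_cover V' E' V E p"
  obtains c where "CT V' E' p = {id, c}" "c \<noteq> id" "c \<in> Aut V' E'" "c \<circ> c = id"
    "\<forall>x\<in>V'. c x \<noteq> x" "\<forall>x\<in>V'. p (c x) = p x"
    "\<forall>x\<in>V'. \<forall>y\<in>V'. p x = p y \<longrightarrow> y = x \<or> y = c x"
proof -
  have reg: "regular_covering V' E' V E p" and cd: "card (CT V' E' p) = 2" using tc by (auto simp: two_cover_def)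
  from cd obtain u v where uv: "CT V' E' p = {u, v}" "u \<noteq> v" unfolding card_2_iff by blast
  have idm: "id \<in> CT V' E' p" by (rule CT_id)
  obtain c where C: "CT V' E' p = {id, c}" "c \<noteq> id"
  proof (cases "u = id")
    case True then show ?thesis using that uv by simp
  next
    case False then have "v = id" using idm uv by simp
    then show ?thesis using that[of u] uv False by (simp add: insert_commute)
  qed
  have cCT: "c \<in> CT V' E' p" using C by auto
  then have cA: "c \<in> Aut V' E'" and cp: "\<forall>x\<in>V'. p (c x) = p x" unfolding CT_def by auto
  have "c \<circ> c \<in> CT V' E' p" using CT_comp[OF cCT cCT] .
  then have "c \<circ> c = id \<or> c \<circ> c = c" using C(1) by simp
  moreover have "c \<circ> c \<noteq> c"
  proof
    assume "c \<circ> c = c"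
    then have cc: "\<And>x. c (c x) = c x" by (metis comp_apply)
    have "\<And>x. c x = x"
    proof -
      fix x show "c x = x" using cc[of x] by (rule Aut_inj[OF cA])
    qed
    then show False using C(2) by auto
  qed
  ultimately have cc: "c \<circ> c = id" by auto
  have uniq: "\<forall>x1\<in>V'. \<forall>x2\<in>V'. p x1 = p x2 \<longrightarrow> (\<exists>!c. c \<in> CT V' E' p \<and> c x1 = x2)"
    using reg by (simp add: regular_covering_def)
  have fp: "\<forall>x\<in>V'. c x \<noteq> x"
  proof (intro ballI notI)
    fix x assume x: "x \<in> V'" "c x = x"
    then have e: "\<exists>!d. d \<in> CT V' E' p \<and> d x = x" using uniq by blast
    have "c \<in> CT V' E' p \<and> c x = x" "id \<in> CT V' E' p \<and> id x = x" using cCT idm x by auto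
    then have "c = id" using e by blast
    then show False using C by auto
  qed
  have fib: "\<forall>x\<in>V'. \<forall>y\<in>V'. p x = p y \<longrightarrow> y = x \<or> y = c x"
  proof (intro ballI impI)
    fix x y assume "x \<in> V'" "y \<in> V'" "p x = p y"
    then have "\<exists>!d. d \<in> CT V' E' p \<and> d x = y" using uniq by blast
    then obtain d where "d \<in> CT V' E' p" "d x = y" using ex1_implies_ex by blast
    then show "y = x \<or> y = c x" using C by auto
  qed
  show ?thesis by (rule that[OF C(1) C(2) cA cc fp cp fib])
qed

lemma lifted_groupI: "h \<in> Aut V' E' \<Longrightarrow> g \<in> K \<Longrightarrow> is_lift V' p g h \<Longrightarrow> h \<in> lifted_group V' E' p K"
  unfolding lifted_group_def by blast

lemma lifted_groupE: "h \<in> lifted_group V' E' p K \<Longrightarrow> (\<And>g. h \<in> Aut V' E' \<Longrightarrow> g \<in> K \<Longrightarrow> is_lift V' p g h \<Longrightarrow> P) \<Longrightarrow> P"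
  unfolding lifted_group_def by blast

lemma lifted_group_aut:
  assumes K: "aut_group V E K"
  shows "aut_group V' E' (lifted_group V' E' p K)"
proof -
  have KA: "K \<subseteq> Aut V E" and Kid: "id \<in> K" and Kc: "\<forall>f\<in>K. \<forall>g\<in>K. f \<circ> g \<in> K"
    and Ki: "\<forall>f\<in>K. inv f \<in> K" using K unfolding aut_group_def by auto
  have 1: "lifted_group V' E' p K \<subseteq> Aut V' E'" unfolding lifted_group_def by auto
  have "is_lift V' p id id" unfolding is_lift_def by simp
  then have 2: "id \<in> lifted_group V' E' p K" using Aut_id Kid by (rule_tac lifted_groupI) auto
  have 3: "f \<circ> g \<in> lifted_group V' E' p K" if fL: "f \<in> lifted_group V' E' p K" and gL: "g \<in> lifted_group V' E' p K" for f g
  proof -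
    obtain f0 where f: "f \<in> Aut V' E'" "f0 \<in> K" "is_lift V' p f0 f"
      using fL by (rule lifted_groupE)
    obtain g0 where g: "g \<in> Aut V' E'" "g0 \<in> K" "is_lift V' p g0 g"
      using gL by (rule lifted_groupE)
    have fg: "f0 \<circ> g0 \<in> K" using Kc f(2) g(2) by blast
    have "is_lift V' p (f0 \<circ> g0) (f \<circ> g)"
      unfolding is_lift_def
    proof
      fix x assume x: "x \<in> V'"
      then have gx: "g x \<in> V'" by (rule Aut_mem[OF g(1)])
      have "f0 (p (g x)) = p (f (g x))" using f(3) gx unfolding is_lift_def by blast
      moreover have "g0 (p x) = p (g x)" using g(3) x unfolding is_lift_def by blast
      ultimately show "(f0 \<circ> g0) (p x) = p ((f \<circ> g) x)" by simp
    qed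
    then show ?thesis using Aut_comp[OF f(1) g(1)] fg by (rule_tac lifted_groupI) auto
  qed
  have 4: "inv f \<in> lifted_group V' E' p K" if fL: "f \<in> lifted_group V' E' p K" for f
  proof -
    obtain f0 where f: "f \<in> Aut V' E'" "f0 \<in> K" "is_lift V' p f0 f"
      using fL by (rule lifted_groupE)
    have f0A: "f0 \<in> Aut V E" using f(2) KA by blast
    have if0: "inv f0 \<in> K" using Ki f(2) by blast
    have "is_lift V' p (inv f0) (inv f)"
      unfolding is_lift_def
    proof
      fix y assume y: "y \<in> V'"
      have "inv f y \<in> V'" using Aut_inv_mem[OF f(1) y] .
      then have "f0 (p (inv f y)) = p (f (inv f y))" using f(3) unfolding is_lift_def by blast
      then have e: "f0 (p (inv f y)) = p y" using Aut_inv2[OF f(1)] by simp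
      have "inv f0 (f0 (p (inv f y))) = p (inv f y)" by (rule Aut_inv1[OF f0A])
      then show "inv f0 (p y) = p (inv f y)" using e by simp
    qed
    then show ?thesis using Aut_inv[OF f(1)] if0 by (rule_tac lifted_groupI) auto
  qed
  show ?thesis unfolding aut_group_def using 1 2 3 4 by blast
qed

lemma card_fibres2:
  assumes fin: "finite A" and c2: "\<forall>x\<in>A. card {y\<in>A. f y = f x} = 2"
  shows "card A = 2 * card (f ` A)"
proof -
  have U: "A = (\<Union>i\<in>f`A. {y\<in>A. f y = i})" by auto
  have f1: "finite (f ` A)" using fin by simp
  have f2: "\<forall>i\<in>f`A. finite {y\<in>A. f y = i}" using fin by simp
  have d: "\<forall>i\<in>f`A. \<forall>j\<in>f`A. i \<noteq> j \<longrightarrow> {y\<in>A. f y = i} \<inter> {y\<in>A. f y = j} = {}" by blast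
  have "card (\<Union>i\<in>f`A. {y\<in>A. f y = i}) = (\<Sum>i\<in>f`A. card {y\<in>A. f y = i})"
    using card_UN_disjoint[OF f1 f2 d] .
  also have "\<dots> = (\<Sum>i\<in>f`A. 2)"
  proof (rule sum.cong)
    fix i assume "i \<in> f ` A" then obtain x where "x \<in> A" "i = f x" by blast
    then show "card {y\<in>A. f y = i} = 2" using c2 by simp
  qed simp
  also have "\<dots> = 2 * card (f ` A)" by simp
  finally show ?thesis using U by simp
qed


lemma CT_unique:
  assumes cov: "covering V' E' V E p" and c: "c \<in> CT V' E' p" and d: "d \<in> CT V' E' p"
    and x: "x \<in> V'" and e: "c x = d x"
  shows "c = d"
proof -
  have "c \<in> Aut V' E'" "d \<in> Aut V' E'" "\<forall>x\<in>V'. p (c x) = p x" "\<forall>x\<in>V'. p (d x) = p x"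
    using c d unfolding CT_def by auto
  then show ?thesis using ULL[OF cov, of c d x] x e by simp
qed

lemma bij_factor:
  assumes "bij_betw q A B" "bij_betw r A C" "\<forall>x\<in>A. f (q x) = r x"
  shows "bij_betw f B C"
proof -
  have B: "B = q ` A" using assms(1) by (simp add: bij_betw_def)
  have "inj_on f B"
  proof (rule inj_onI)
    fix u v assume "u \<in> B" "v \<in> B" "f u = f v"
    then obtain x y where xy: "x \<in> A" "y \<in> A" "u = q x" "v = q y" using B by blast
    then have "r x = r y" using assms(3) \<open>f u = f v\<close> by simp
    then have "x = y" using assms(2) xy unfolding bij_betw_def inj_on_def by blast
    then show "u = v" using xy by simp
  qed
  moreover have "f ` B = C"
  proof -
    have "f ` B = (\<lambda>x. f (q x)) ` A" using B by auto
    also have "\<dots> = r ` A" using assms(3) by (intro image_cong) auto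
    also have "\<dots> = C" using assms(2) by (simp add: bij_betw_def)
    finally show ?thesis .
  qed
  ultimately show ?thesis by (simp add: bij_betw_def)
qed

locale chain2 =
  fixes V0 :: "'a set" and E0 :: "'a \<Rightarrow> 'a \<Rightarrow> bool"
    and V1 :: "'b set" and E1 :: "'b \<Rightarrow> 'b \<Rightarrow> bool" and p1 :: "'b \<Rightarrow> 'a"
    and V2 :: "'c set" and E2 :: "'c \<Rightarrow> 'c \<Rightarrow> bool" and p2 :: "'c \<Rightarrow> 'b"
    and G :: "('a \<Rightarrow> 'a) set" and G1 :: "('b \<Rightarrow> 'b) set" and G2 :: "('c \<Rightarrow> 'c) set"
    and H :: "('c \<Rightarrow> 'c) set"
  assumes adm: "admissible2 V2 E2 p2 V1 E1 p1 V0 E0 G G1 G2"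
    and cmp: "complement V2 E2 p2 G1 H"
begin

lemma tc1: "two_cover V1 E1 V0 E0 p1" using adm unfolding admissible2_def by blast
lemma tc2: "two_cover V2 E2 V1 E1 p2" using adm unfolding admissible2_def by blast
lemma autG: "aut_group V0 E0 G" using adm unfolding admissible2_def by blast
lemma al1: "all_lift V1 E1 p1 G" using adm unfolding admissible2_def by blast
lemma al2: "all_lift V2 E2 p2 G1" using adm unfolding admissible2_def by blast
lemma G1def: "G1 = lifted_group V1 E1 p1 G" using adm unfolding admissible2_def by blast
lemma G2def: "G2 = lifted_group V2 E2 p2 G1" using adm unfolding admissible2_def by blast
lemma cov1: "covering V1 E1 V0 E0 p1" using tc1 by (simp add: two_cover_def regular_covering_def)
lemma cov2: "covering V2 E2 V1 E1 p2" using tc2 by (simp add: two_cover_def regular_covering_def)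
lemma gr0: "graph V0 E0" using cov1 by (simp add: covering_def)
lemma gr1: "graph V1 E1" using cov1 by (simp add: covering_def)
lemma gr2: "graph V2 E2" using cov2 by (simp add: covering_def)
lemma img1: "p1 ` V1 = V0" using cov1 by (simp add: covering_def)
lemma img2: "p2 ` V2 = V1" using cov2 by (simp add: covering_def)
lemma edge1: "E1 x y \<Longrightarrow> E0 (p1 x) (p1 y)" using cov1 by (simp add: covering_def)
lemma edge2: "E2 x y \<Longrightarrow> E1 (p2 x) (p2 y)" using cov2 by (simp add: covering_def)
lemma autG1: "aut_group V1 E1 G1" using lifted_group_aut[OF autG] G1def by simp
lemma autG2: "aut_group V2 E2 G2" using lifted_group_aut[OF autG1] G2def by simp
lemma autH: "aut_group V2 E2 H" using cmp by (simp add: complement_def)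
lemma HG2: "H \<subseteq> G2" using cmp G2def by (simp add: complement_def)
lemma HCT: "H \<inter> CT V2 E2 p2 = {id}" using cmp by (simp add: complement_def)
lemma Hprod: "{h \<circ> c | h c. h \<in> H \<and> c \<in> CT V2 E2 p2} = G2" using cmp G2def by (simp add: complement_def)
lemma V2ne: "V2 \<noteq> {}" using gr2 by (simp add: graph_def)
lemma V1ne: "V1 \<noteq> {}" using gr1 by (simp add: graph_def)
lemma finV2: "finite V2" using gr2 by (simp add: graph_def)
lemma finV1: "finite V1" using gr1 by (simp add: graph_def)

lemma G1A: "G1 \<subseteq> Aut V1 E1" using autG1 by (simp add: aut_group_def)
lemma G2A: "G2 \<subseteq> Aut V2 E2" using autG2 by (simp add: aut_group_def)
lemma HA: "H \<subseteq> Aut V2 E2" using autH by (simp add: aut_group_def)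
lemma G2comp: "f \<in> G2 \<Longrightarrow> g \<in> G2 \<Longrightarrow> f \<circ> g \<in> G2" using autG2 by (simp add: aut_group_def)
lemma G2inv: "f \<in> G2 \<Longrightarrow> inv f \<in> G2" using autG2 by (simp add: aut_group_def)
lemma G2id: "id \<in> G2" using autG2 by (simp add: aut_group_def)
lemma Hcomp: "f \<in> H \<Longrightarrow> g \<in> H \<Longrightarrow> f \<circ> g \<in> H" using autH by (simp add: aut_group_def)
lemma Hinv: "f \<in> H \<Longrightarrow> inv f \<in> H" using autH by (simp add: aut_group_def)
lemma Hid: "id \<in> H" using autH by (simp add: aut_group_def)
lemma G1id: "id \<in> G1" using autG1 by (simp add: aut_group_def)
lemma Gid: "id \<in> G" using autG by (simp add: aut_group_def)

definition "TC V' E' V E p c \<longleftrightarrow> CT V' E' p = {id, c} \<and> c \<noteq> id \<and> c \<in> Aut V' E' \<and> c \<circ> c = id \<and>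
    (\<forall>x\<in>V'. c x \<noteq> x) \<and> (\<forall>x\<in>V'. p (c x) = p x) \<and>
    (\<forall>x\<in>V'. \<forall>y\<in>V'. p x = p y \<longrightarrow> y = x \<or> y = c x)"

lemma TC_ex: "two_cover V' E' V E p \<Longrightarrow> \<exists>c. TC V' E' V E p c"
  unfolding TC_def by (erule two_cover_struct) blast

definition "c1 = (SOME c. TC V1 E1 V0 E0 p1 c)"
definition "c2 = (SOME c. TC V2 E2 V1 E1 p2 c)"

lemma c1TC: "TC V1 E1 V0 E0 p1 c1" unfolding c1_def using TC_ex[OF tc1] by (rule someI_ex)
lemma c2TC: "TC V2 E2 V1 E1 p2 c2" unfolding c2_def using TC_ex[OF tc2] by (rule someI_ex)

lemma CT1: "CT V1 E1 p1 = {id, c1}" and c1ne: "c1 \<noteq> id" and c1A: "c1 \<in> Aut V1 E1"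
  and c1c1: "c1 \<circ> c1 = id" and c1fp: "\<And>x. x \<in> V1 \<Longrightarrow> c1 x \<noteq> x"
  and c1p: "\<And>x. x \<in> V1 \<Longrightarrow> p1 (c1 x) = p1 x"
  and c1fib: "\<And>x y. x \<in> V1 \<Longrightarrow> y \<in> V1 \<Longrightarrow> p1 x = p1 y \<Longrightarrow> y = x \<or> y = c1 x"
  using c1TC unfolding TC_def by auto

lemma CT2: "CT V2 E2 p2 = {id, c2}" and c2ne: "c2 \<noteq> id" and c2A: "c2 \<in> Aut V2 E2"
  and c2c2: "c2 \<circ> c2 = id" and c2fp: "\<And>x. x \<in> V2 \<Longrightarrow> c2 x \<noteq> x"
  and c2p: "\<And>x. x \<in> V2 \<Longrightarrow> p2 (c2 x) = p2 x"
  and c2fib: "\<And>x y. x \<in> V2 \<Longrightarrow> y \<in> V2 \<Longrightarrow> p2 x = p2 y \<Longrightarrow> y = x \<or> y = c2 x"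
  using c2TC unfolding TC_def by auto

lemma c1c1x: "c1 (c1 x) = x" using c1c1 by (metis comp_apply id_apply)
lemma c2c2x: "c2 (c2 x) = x" using c2c2 by (metis comp_apply id_apply)

lemma c2G2: "c2 \<in> G2"
proof -
  have "is_lift V2 p2 id c2" unfolding is_lift_def using c2p by simp
  then show ?thesis using G2def c2A G1id unfolding lifted_group_def by blast
qed

lemma c1G1: "c1 \<in> G1"
proof -
  have "is_lift V1 p1 id c1" unfolding is_lift_def using c1p by simp
  then show ?thesis using G1def c1A Gid unfolding lifted_group_def by blast
qed

lemma c2H: "c2 \<notin> H" using HCT CT2 c2ne by blast

lemma a_ex: "\<exists>a. a \<in> H \<and> (\<forall>x\<in>V2. p2 (a x) = c1 (p2 x))"
proof -
  obtain h where h: "h \<in> Aut V2 E2" "is_lift V2 p2 c1 h" using al2 c1G1 unfolding all_lift_def by blast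
  have "h \<in> G2" using h G2def c1G1 unfolding lifted_group_def by blast
  then obtain h' c where hc: "h = h' \<circ> c" "h' \<in> H" "c \<in> CT V2 E2 p2" using Hprod by blast
  have hl: "\<forall>x\<in>V2. p2 (h x) = c1 (p2 x)" using h(2) unfolding is_lift_def by auto
  show ?thesis
  proof (cases "c = id")
    case True then show ?thesis using hc hl by (intro exI[of _ h']) auto
  next
    case False then have "c = c2" using hc CT2 by auto
    then have "h' = h \<circ> c2" using hc c2c2 by (metis comp_assoc comp_id)
    then have "\<forall>x\<in>V2. p2 (h' x) = c1 (p2 x)" using hl c2p Aut_mem[OF c2A] by auto
    then show ?thesis using hc by blast
  qed
qed

definition "a = (SOME a. a \<in> H \<and> (\<forall>x\<in>V2. p2 (a x) = c1 (p2 x)))"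

lemma aH: "a \<in> H" and ap: "\<And>x. x \<in> V2 \<Longrightarrow> p2 (a x) = c1 (p2 x)"
  using someI_ex[OF a_ex] unfolding a_def[symmetric] by auto

lemma aA: "a \<in> Aut V2 E2" using aH HA by auto
lemma aG2: "a \<in> G2" using aH HG2 by auto
lemma amem: "x \<in> V2 \<Longrightarrow> a x \<in> V2" using Aut_mem[OF aA] .
lemma c2mem: "x \<in> V2 \<Longrightarrow> c2 x \<in> V2" using Aut_mem[OF c2A] .
lemma p2mem: "x \<in> V2 \<Longrightarrow> p2 x \<in> V1" using img2 by auto
lemma p1mem: "x \<in> V1 \<Longrightarrow> p1 x \<in> V0" using img1 by auto

lemma afp: "x \<in> V2 \<Longrightarrow> a x \<noteq> x"
  using ap c1fp p2mem by metis

lemma aa: "a \<circ> a = id"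
proof -
  have "a \<circ> a \<in> H" using Hcomp aH by auto
  moreover have "a \<circ> a \<in> CT V2 E2 p2"
  proof -
    have "\<forall>x\<in>V2. p2 ((a \<circ> a) x) = p2 x" using ap amem c1c1x by simp
    then show ?thesis unfolding CT_def using Aut_comp[OF aA aA] by simp
  qed
  ultimately show ?thesis using HCT by blast
qed

lemma aax: "a (a x) = x" using aa by (metis comp_apply id_apply)

lemma pa: "x \<in> V2 \<Longrightarrow> p1 (p2 (a x)) = p1 (p2 x)" using ap c1p p2mem by simp

lemma ac2: "a \<circ> c2 = c2 \<circ> a"
proof -
  obtain x0 where x0: "x0 \<in> V2" using V2ne by blast
  have pp: "\<forall>x\<in>V2. p2 ((a \<circ> c2) x) = p2 ((c2 \<circ> a) x)" using ap c2p c2mem amem by simp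
  have "c2 (a x0) = a (c2 x0) \<or> c2 (a x0) = c2 (a (c2 x0))"
    using c2fib[of "a (c2 x0)" "c2 (a x0)"] pp x0 amem c2mem by simp
  moreover have "c2 (a x0) \<noteq> c2 (a (c2 x0))"
  proof
    assume "c2 (a x0) = c2 (a (c2 x0))"
    then have "x0 = c2 x0" using Aut_inj[OF c2A] Aut_inj[OF aA] by metis
    then show False using c2fp x0 by metis
  qed
  ultimately have "(a \<circ> c2) x0 = (c2 \<circ> a) x0" by simp
  then show ?thesis by (rule ULL[OF cov2 Aut_comp[OF aA c2A] Aut_comp[OF c2A aA] pp x0])
qed

lemma ac2x: "a (c2 x) = c2 (a x)" using ac2 by (metis comp_apply)

end


context chain2 begin

lemma G1c1: assumes g1: "g1 \<in> G1" shows "g1 \<circ> c1 = c1 \<circ> g1"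
proof -
  obtain g where g: "g1 \<in> Aut V1 E1" "g \<in> G" "is_lift V1 p1 g g1"
    using g1 G1def by (auto elim: lifted_groupE)
  have gl: "\<And>u. u \<in> V1 \<Longrightarrow> g (p1 u) = p1 (g1 u)" using g(3) unfolding is_lift_def by blast
  have m: "\<And>u. u \<in> V1 \<Longrightarrow> g1 u \<in> V1" using Aut_mem[OF g(1)] .
  have c1m: "\<And>u. u \<in> V1 \<Longrightarrow> c1 u \<in> V1" using Aut_mem[OF c1A] .
  obtain u0 where u0: "u0 \<in> V1" using V1ne by blast
  have pp: "\<forall>u\<in>V1. p1 ((g1 \<circ> c1) u) = p1 ((c1 \<circ> g1) u)"
  proof
    fix u assume u: "u \<in> V1"
    have "p1 (g1 (c1 u)) = g (p1 (c1 u))" using gl[OF c1m[OF u]] by simp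
    also have "\<dots> = g (p1 u)" using c1p[OF u] by simp
    also have "\<dots> = p1 (g1 u)" using gl[OF u] .
    also have "\<dots> = p1 (c1 (g1 u))" using c1p[OF m[OF u]] by simp
    finally show "p1 ((g1 \<circ> c1) u) = p1 ((c1 \<circ> g1) u)" by simp
  qed
  have "g1 (c1 u0) = c1 (g1 u0) \<or> g1 (c1 u0) = c1 (c1 (g1 u0))"
    using c1fib[of "c1 (g1 u0)" "g1 (c1 u0)"] pp u0 m c1m by simp
  moreover have "g1 (c1 u0) \<noteq> c1 (c1 (g1 u0))"
  proof
    assume "g1 (c1 u0) = c1 (c1 (g1 u0))"
    then have "g1 (c1 u0) = g1 u0" using c1c1x by simp
    then have "c1 u0 = u0" by (rule Aut_inj[OF g(1)])
    then show False using c1fp u0 by blast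
  qed
  ultimately have "(g1 \<circ> c1) u0 = (c1 \<circ> g1) u0" by simp
  then show ?thesis by (rule ULL[OF cov1 Aut_comp[OF g(1) c1A] Aut_comp[OF c1A g(1)] pp u0])
qed

lemma Ha: assumes h: "h \<in> H" shows "h \<circ> a = a \<circ> h"
proof -
  have hG2: "h \<in> G2" using h HG2 by blast
  obtain g1 where g1: "h \<in> Aut V2 E2" "g1 \<in> G1" "is_lift V2 p2 g1 h"
    using hG2 G2def by (auto elim: lifted_groupE)
  have gl: "\<And>x. x \<in> V2 \<Longrightarrow> g1 (p2 x) = p2 (h x)" using g1(3) unfolding is_lift_def by blast
  have m: "\<And>x. x \<in> V2 \<Longrightarrow> h x \<in> V2" using Aut_mem[OF g1(1)] .
  have comm: "\<And>u. g1 (c1 u) = c1 (g1 u)" using G1c1[OF g1(2)] by (metis comp_apply)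
  obtain x0 where x0: "x0 \<in> V2" using V2ne by blast
  have pp: "\<forall>x\<in>V2. p2 ((h \<circ> a) x) = p2 ((a \<circ> h) x)"
  proof
    fix x assume x: "x \<in> V2"
    have "p2 (h (a x)) = g1 (p2 (a x))" using gl[OF amem[OF x]] by simp
    also have "\<dots> = g1 (c1 (p2 x))" using ap[OF x] by simp
    also have "\<dots> = c1 (g1 (p2 x))" using comm by simp
    also have "\<dots> = c1 (p2 (h x))" using gl[OF x] by simp
    also have "\<dots> = p2 (a (h x))" using ap[OF m[OF x]] by simp
    finally show "p2 ((h \<circ> a) x) = p2 ((a \<circ> h) x)" by simp
  qed
  have haA: "h \<circ> a \<in> Aut V2 E2" using Aut_comp[OF g1(1) aA] .
  have ahA: "a \<circ> h \<in> Aut V2 E2" using Aut_comp[OF aA g1(1)] .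
  have "h (a x0) = a (h x0) \<or> h (a x0) = c2 (a (h x0))"
    using c2fib[of "a (h x0)" "h (a x0)"] pp x0 m amem by simp
  moreover have "h (a x0) \<noteq> c2 (a (h x0))"
  proof
    assume e: "h (a x0) = c2 (a (h x0))"
    have c2ahA: "c2 \<circ> (a \<circ> h) \<in> Aut V2 E2" using Aut_comp[OF c2A ahA] .
    have pp2: "\<forall>x\<in>V2. p2 ((h \<circ> a) x) = p2 ((c2 \<circ> (a \<circ> h)) x)"
      using pp c2p amem m by simp
    have "(h \<circ> a) x0 = (c2 \<circ> (a \<circ> h)) x0" using e by simp
    then have E: "h \<circ> a = c2 \<circ> (a \<circ> h)" by (rule ULL[OF cov2 haA c2ahA pp2 x0])
    have "h \<circ> a \<circ> inv h = c2 \<circ> a"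
    proof
      fix z
      have "h (a (inv h z)) = c2 (a (h (inv h z)))" using E by (metis comp_apply)
      then show "(h \<circ> a \<circ> inv h) z = (c2 \<circ> a) z" using Aut_inv2[OF g1(1)] by simp
    qed
    moreover have "h \<circ> a \<circ> inv h \<in> H" using Hcomp[OF Hcomp[OF h aH] Hinv[OF h]] .
    ultimately have "c2 \<circ> a \<in> H" by simp
    then have "c2 \<circ> a \<circ> a \<in> H" using Hcomp aH by blast
    then have "c2 \<in> H" using aa by (simp add: comp_assoc)
    then show False using c2H by blast
  qed
  ultimately have "(h \<circ> a) x0 = (a \<circ> h) x0" by simp
  then show ?thesis by (rule ULL[OF cov2 haA ahA pp x0])
qed

lemma G2a: assumes h: "h \<in> G2" shows "h \<circ> a = a \<circ> h"
proof -
  obtain h' c where hc: "h = h' \<circ> c" "h' \<in> H" "c \<in> CT V2 E2 p2" using h Hprod by blast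
  have 1: "h' \<circ> a = a \<circ> h'" using Ha[OF hc(2)] .
  have 2: "c \<circ> a = a \<circ> c" using hc(3) CT2 ac2 by auto
  have "h \<circ> a = h' \<circ> (c \<circ> a)" using hc by (simp add: comp_assoc)
  also have "\<dots> = (h' \<circ> a) \<circ> c" using 2 by (simp add: comp_assoc)
  also have "\<dots> = a \<circ> h" using 1 hc by (simp add: comp_assoc)
  finally show ?thesis .
qed

lemma fibre_p:
  assumes x1: "x1 \<in> V2" and x2: "x2 \<in> V2" and e: "p1 (p2 x1) = p1 (p2 x2)"
  shows "x2 = x1 \<or> x2 = c2 x1 \<or> x2 = a x1 \<or> x2 = a (c2 x1)"
proof -
  have "p2 x2 = p2 x1 \<or> p2 x2 = c1 (p2 x1)" using c1fib[OF p2mem[OF x1] p2mem[OF x2] e] .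
  then show ?thesis
  proof
    assume "p2 x2 = p2 x1" then show ?thesis using c2fib[OF x1 x2] by metis
  next
    assume "p2 x2 = c1 (p2 x1)"
    then have "p2 (a x1) = p2 x2" using ap[OF x1] by simp
    then have "x2 = a x1 \<or> x2 = c2 (a x1)" using c2fib[OF amem[OF x1] x2] by simp
    then show ?thesis using ac2x by metis
  qed
qed

end


context chain2 begin

definition "orb x = {x, a x}"
definition "Orb = orb ` V2"

lemma orb_eq: "orb y = orb x \<longleftrightarrow> y = x \<or> y = a x"
proof
  assume "orb y = orb x"
  then have "y \<in> {x, a x}" unfolding orb_def by blast
  then show "y = x \<or> y = a x" by simp
next
  assume "y = x \<or> y = a x"
  then show "orb y = orb x"
  proof
    assume "y = x" then show ?thesis by simp
  next
    assume "y = a x" then show ?thesis unfolding orb_def using aax[of x] by (simp add: insert_commute)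
  qed
qed

lemma card_Orb: "card V2 = 2 * card Orb"
proof -
  have "\<forall>x\<in>V2. card {y\<in>V2. orb y = orb x} = 2"
  proof
    fix x assume x: "x \<in> V2"
    have "{y\<in>V2. orb y = orb x} = {x, a x}" using orb_eq x amem by auto
    then show "card {y\<in>V2. orb y = orb x} = 2" using afp[OF x] by simp
  qed
  then show ?thesis unfolding Orb_def by (rule card_fibres2[OF finV2])
qed

lemma card_V1: "card V2 = 2 * card V1"
proof -
  have "\<forall>x\<in>V2. card {y\<in>V2. p2 y = p2 x} = 2"
  proof
    fix x assume x: "x \<in> V2"
    have "{y\<in>V2. p2 y = p2 x} = {x, c2 x}"
    proof
      show "{y\<in>V2. p2 y = p2 x} \<subseteq> {x, c2 x}"
      proof
        fix y assume "y \<in> {y\<in>V2. p2 y = p2 x}"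
        then have "y \<in> V2" "p2 x = p2 y" by auto
        then have "y = x \<or> y = c2 x" using c2fib[OF x] by blast
        then show "y \<in> {x, c2 x}" by simp
      qed
      show "{x, c2 x} \<subseteq> {y\<in>V2. p2 y = p2 x}" using c2p[OF x] c2mem[OF x] x by simp
    qed
    then show "card {y\<in>V2. p2 y = p2 x} = 2" using c2fp[OF x] by simp
  qed
  then have "card V2 = 2 * card (p2 ` V2)" by (rule card_fibres2[OF finV2])
  then show ?thesis using img2 by simp
qed

lemma bt_ex: "\<exists>b. bij_betw b Orb V1"
proof -
  have f: "finite Orb" unfolding Orb_def using finV2 by simp
  have c: "card Orb = card V1" using card_Orb card_V1 by simp
  show ?thesis using finite_same_card_bij[OF f finV1 c] .
qed

definition "bt = (SOME b. bij_betw b Orb V1)"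
lemma bt: "bij_betw bt Orb V1" unfolding bt_def using bt_ex by (rule someI_ex)

definition "q x = bt (orb x)"

lemma q_eq: assumes "x \<in> V2" "y \<in> V2" shows "q y = q x \<longleftrightarrow> y = x \<or> y = a x"
proof -
  have "orb x \<in> Orb" "orb y \<in> Orb" using assms unfolding Orb_def by auto
  moreover have "inj_on bt Orb" using bt by (simp add: bij_betw_def)
  ultimately have "q y = q x \<longleftrightarrow> orb y = orb x" unfolding q_def inj_on_def by metis
  then show ?thesis using orb_eq by simp
qed

lemma q_img: "q ` V2 = V1"
proof -
  have "q ` V2 = bt ` Orb" unfolding q_def Orb_def by auto
  then show ?thesis using bt by (simp add: bij_betw_def)
qed

lemma q_mem: "x \<in> V2 \<Longrightarrow> q x \<in> V1" using q_img by auto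

lemma qa: "q (a x) = q x" unfolding q_def using orb_eq[of "a x" x] by simp

definition "rep u = (SOME x. x \<in> V2 \<and> q x = u)"

lemma rep: assumes "u \<in> V1" shows "rep u \<in> V2" "q (rep u) = u"
proof -
  have "u \<in> q ` V2" using assms q_img by simp
  then have "\<exists>x. x \<in> V2 \<and> q x = u" by (metis imageE)
  then have "rep u \<in> V2 \<and> q (rep u) = u" unfolding rep_def by (rule someI_ex)
  then show "rep u \<in> V2" "q (rep u) = u" by auto
qed

lemma rep_q: assumes x: "x \<in> V2" shows "rep (q x) = x \<or> rep (q x) = a x"
proof -
  have "q (rep (q x)) = q x" using rep(2)[OF q_mem[OF x]] .
  then show ?thesis using q_eq[OF x rep(1)[OF q_mem[OF x]]] by blast
qed

definition "E1n u v \<longleftrightarrow> (\<exists>x y. E2 x y \<and> q x = u \<and> q y = v)"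
definition "p1n u = p1 (p2 (rep u))"

lemma p1n_q: assumes x: "x \<in> V2" shows "p1n (q x) = p1 (p2 x)"
proof (cases "rep (q x) = x")
  case False then have "rep (q x) = a x" using rep_q[OF x] by simp
  then show ?thesis using pa[OF x] unfolding p1n_def by simp
qed (simp add: p1n_def)

definition "desc h u = (if u \<in> V1 then q (h (rep u)) else u)"
definition "Ac = {h \<in> Aut V2 E2. h \<circ> a = a \<circ> h}"

lemma AcD: "h \<in> Ac \<Longrightarrow> h \<in> Aut V2 E2" "h \<in> Ac \<Longrightarrow> h (a x) = a (h x)"
proof -
  assume "h \<in> Ac" then have "h \<in> Aut V2 E2" "h \<circ> a = a \<circ> h" unfolding Ac_def by auto
  then show "h \<in> Aut V2 E2" "h (a x) = a (h x)" by (auto dest: fun_cong[where x=x])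
qed

lemma AcI: "h \<in> Aut V2 E2 \<Longrightarrow> (\<And>x. h (a x) = a (h x)) \<Longrightarrow> h \<in> Ac"
  unfolding Ac_def by (auto simp: comp_def)

lemma Ac_comp: assumes h: "h \<in> Ac" and g: "g \<in> Ac" shows "h \<circ> g \<in> Ac"
proof (rule AcI)
  show "h \<circ> g \<in> Aut V2 E2" using Aut_comp[OF AcD(1)[OF h] AcD(1)[OF g]] .
  fix x show "(h \<circ> g) (a x) = a ((h \<circ> g) x)" using AcD(2)[OF g, of x] AcD(2)[OF h, of "g x"] by simp
qed

lemma Ac_inv: assumes h: "h \<in> Ac" shows "inv h \<in> Ac"
proof (rule AcI)
  have hA: "h \<in> Aut V2 E2" using AcD h by blast
  show "inv h \<in> Aut V2 E2" using Aut_inv[OF hA] .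
  fix x
  have "h (a (inv h x)) = a x" using AcD(2)[OF h] Aut_inv2[OF hA] by simp
  then have "inv h (h (a (inv h x))) = inv h (a x)" by simp
  then show "inv h (a x) = a (inv h x)" using Aut_inv1[OF hA] by simp
qed

lemma Ac_id: "id \<in> Ac" by (rule AcI) (rule Aut_id, simp)
lemma a_Ac: "a \<in> Ac" by (rule AcI) (rule aA, simp)
lemma c2_Ac: "c2 \<in> Ac" by (rule AcI) (rule c2A, rule ac2x[symmetric])
lemma G2_Ac: "h \<in> G2 \<Longrightarrow> h \<in> Ac" unfolding Ac_def using G2a G2A by blast

lemma desc_q: assumes h: "h \<in> Ac" and x: "x \<in> V2" shows "desc h (q x) = q (h x)"
proof -
  have "desc h (q x) = q (h (rep (q x)))" unfolding desc_def using q_mem[OF x] by simp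
  moreover have "q (h (rep (q x))) = q (h x)"
  proof (cases "rep (q x) = x")
    case False then have "rep (q x) = a x" using rep_q[OF x] by simp
    then show ?thesis using AcD(2)[OF h, of x] qa[of "h x"] by simp
  qed simp
  ultimately show ?thesis by simp
qed

lemma Ac_mem: "h \<in> Ac \<Longrightarrow> x \<in> V2 \<Longrightarrow> h x \<in> V2" by (rule Aut_mem[OF AcD(1)])

lemma desc_mem: assumes h: "h \<in> Ac" and u: "u \<in> V1" shows "desc h u \<in> V1"
  using u q_mem Ac_mem[OF h rep(1)[OF u]] unfolding desc_def by simp

lemma desc_out: "u \<notin> V1 \<Longrightarrow> desc h u = u" unfolding desc_def by simp

lemma V1_q: assumes "u \<in> V1" obtains x where "x \<in> V2" "u = q x"
proof -
  have "u \<in> q ` V2" using assms q_img by simp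
  then show ?thesis using that by (metis imageE)
qed

lemma desc_comp: assumes h: "h \<in> Ac" and g: "g \<in> Ac" shows "desc (h \<circ> g) = desc h \<circ> desc g"
proof
  fix u show "desc (h \<circ> g) u = (desc h \<circ> desc g) u"
  proof (cases "u \<in> V1")
    case True
    then obtain x where x: "x \<in> V2" "u = q x" by (rule V1_q)
    have "desc (h \<circ> g) u = q (h (g x))" using desc_q[OF Ac_comp[OF h g] x(1)] x by simp
    moreover have "desc g u = q (g x)" using desc_q[OF g x(1)] x by simp
    moreover have "desc h (q (g x)) = q (h (g x))" using desc_q[OF h Ac_mem[OF g x(1)]] .
    ultimately show ?thesis by simp
  next
    case False then show ?thesis by (simp add: desc_out)
  qed
qed

lemma desc_id: "desc id = id"
proof
  fix u show "desc id u = id u"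
  proof (cases "u \<in> V1")
    case True then show ?thesis unfolding desc_def using rep(2)[OF True] by simp
  qed (simp add: desc_def)
qed

lemma desc_inv: assumes h: "h \<in> Ac"
  shows "desc h \<circ> desc (inv h) = id" "desc (inv h) \<circ> desc h = id"
proof -
  have hA: "h \<in> Aut V2 E2" using AcD h by blast
  have "h \<circ> inv h = id" using Aut_inv2[OF hA] by (auto simp: comp_def)
  moreover have "inv h \<circ> h = id" using Aut_inv1[OF hA] by (auto simp: comp_def)
  ultimately show "desc h \<circ> desc (inv h) = id" "desc (inv h) \<circ> desc h = id"
    using desc_comp[OF h Ac_inv[OF h]] desc_comp[OF Ac_inv[OF h] h] desc_id by metis+
qed

lemma desc_invx: assumes h: "h \<in> Ac" shows "desc (inv h) (desc h u) = u" "desc h (desc (inv h) u) = u"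
  using desc_inv[OF h] by (metis comp_apply id_apply)+

lemma E1n_V: "E1n u v \<Longrightarrow> u \<in> V1 \<and> v \<in> V1"
  unfolding E1n_def using graph_edge[OF gr2] q_mem by blast

lemma desc_edge: assumes h: "h \<in> Ac" and e: "E1n u v" shows "E1n (desc h u) (desc h v)"
proof -
  obtain x y where xy: "E2 x y" "q x = u" "q y = v" using e unfolding E1n_def by blast
  have V: "x \<in> V2" "y \<in> V2" using graph_edge[OF gr2 xy(1)] by auto
  have "E2 (h x) (h y)" using Aut_edge[OF gr2 AcD(1)[OF h]] xy(1) by simp
  moreover have "desc h u = q (h x)" "desc h v = q (h y)" using desc_q[OF h] V xy by auto
  ultimately show ?thesis unfolding E1n_def by metis
qed

lemma desc_Aut: assumes h: "h \<in> Ac" shows "desc h \<in> Aut V1 E1n"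
proof -
  have hi: "inv h \<in> Ac" using Ac_inv[OF h] .
  have b: "bij_betw (desc h) V1 V1"
  proof (rule bij_betw_byWitness[where f'="desc (inv h)"])
    show "\<forall>u\<in>V1. desc (inv h) (desc h u) = u" using desc_invx(1)[OF h] by blast
    show "\<forall>u\<in>V1. desc h (desc (inv h) u) = u" using desc_invx(2)[OF h] by blast
    show "desc h ` V1 \<subseteq> V1" using desc_mem[OF h] by blast
    show "desc (inv h) ` V1 \<subseteq> V1" using desc_mem[OF hi] by blast
  qed
  have e: "\<forall>u\<in>V1. \<forall>v\<in>V1. E1n (desc h u) (desc h v) \<longleftrightarrow> E1n u v"
  proof (intro ballI iffI)
    fix u v assume "E1n (desc h u) (desc h v)"
    then have "E1n (desc (inv h) (desc h u)) (desc (inv h) (desc h v))" by (rule desc_edge[OF hi])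
    then show "E1n u v" using desc_invx[OF h] by simp
  next
    fix u v assume "E1n u v" then show "E1n (desc h u) (desc h v)" by (rule desc_edge[OF h])
  qed
  have o: "\<forall>u. u \<notin> V1 \<longrightarrow> desc h u = u" using desc_out by blast
  show ?thesis unfolding Aut_def using b e o by simp
qed

end


context chain2 begin

lemma E1n_q: "E2 x y \<Longrightarrow> E1n (q x) (q y)" unfolding E1n_def by blast

lemma conn_q: "E2\<^sup>*\<^sup>* x y \<Longrightarrow> E1n\<^sup>*\<^sup>* (q x) (q y)"
proof (induction rule: rtranclp_induct)
  case base then show ?case by simp
next
  case (step y z)
  then show ?case using E1n_q[OF step.hyps(2)] by (meson rtranclp.rtrancl_into_rtrancl)
qed

lemma graph_E1n: "graph V1 E1n"
proof -
  have gd2: "\<forall>x y. E2 x y \<longrightarrow> E2 y x" "\<forall>x. \<not> E2 x x" "\<forall>x\<in>V2. \<forall>y\<in>V2. E2\<^sup>*\<^sup>* x y"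
    using gr2 unfolding graph_def by auto
  have irr0: "\<And>x. \<not> E0 x x" using gr0 unfolding graph_def by auto
  have s: "\<forall>u v. E1n u v \<longrightarrow> E1n v u" using gd2(1) unfolding E1n_def by blast
  have i: "\<forall>u. \<not> E1n u u"
  proof (intro allI notI)
    fix u assume "E1n u u"
    then obtain x y where xy: "E2 x y" "q x = u" "q y = u" unfolding E1n_def by blast
    have V: "x \<in> V2" "y \<in> V2" using graph_edge[OF gr2 xy(1)] by auto
    have "y = x \<or> y = a x" using q_eq[OF V] xy by simp
    then show False
    proof
      assume "y = x" then show False using xy gd2(2) by simp
    next
      assume "y = a x"
      then have "E0 (p1 (p2 x)) (p1 (p2 (a x)))" using edge1[OF edge2[OF xy(1)]] by simp
      then show False using pa[OF V(1)] irr0 by simp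
    qed
  qed
  have c: "\<forall>u\<in>V1. \<forall>v\<in>V1. E1n\<^sup>*\<^sup>* u v"
  proof (intro ballI)
    fix u v assume "u \<in> V1" "v \<in> V1"
    then obtain x y where "x \<in> V2" "u = q x" "y \<in> V2" "v = q y" using V1_q by metis
    then show "E1n\<^sup>*\<^sup>* u v" using conn_q gd2(3) by blast
  qed
  have e: "\<forall>u v. E1n u v \<longrightarrow> u \<in> V1 \<and> v \<in> V1" using E1n_V by blast
  show ?thesis unfolding graph_def using finV1 V1ne e s i c by blast
qed

lemma cov_q: "covering V2 E2 V1 E1n q"
proof -
  have lb: "bij_betw q {y. E2 x y} {z. E1n (q x) z}" if x: "x \<in> V2" for x
  proof -
    have inj: "inj_on q {y. E2 x y}"
    proof (rule inj_onI)
      fix y y' assume y: "y \<in> {y. E2 x y}" and y': "y' \<in> {y. E2 x y}" and e: "q y = q y'"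
      have V: "y \<in> V2" "y' \<in> V2" using y y' graph_edge[OF gr2] by auto
      have "y' = y \<or> y' = a y" using q_eq[OF V] e by simp
      then show "y = y'"
      proof
        assume ya: "y' = a y"
        have "E1 (p2 x) (p2 y)" "E1 (p2 x) (p2 y')" using y y' edge2 by auto
        moreover have "p1 (p2 y) = p1 (p2 y')" using ya pa[OF V(1)] by simp
        ultimately have "p2 y = p2 y'" using covering_locinj[OF cov1 p2mem[OF x]] by blast
        then have "p2 y = c1 (p2 y)" using ya ap[OF V(1)] by simp
        then show "y = y'" using c1fp[OF p2mem[OF V(1)]] by simp
      qed simp
    qed
    have img: "q ` {y. E2 x y} = {z. E1n (q x) z}"
    proof
      show "q ` {y. E2 x y} \<subseteq> {z. E1n (q x) z}" using E1n_q by blast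
      show "{z. E1n (q x) z} \<subseteq> q ` {y. E2 x y}"
      proof
        fix z assume "z \<in> {z. E1n (q x) z}"
        then obtain x' y' where xy: "E2 x' y'" "q x' = q x" "q y' = z" unfolding E1n_def by blast
        have V: "x' \<in> V2" "y' \<in> V2" using graph_edge[OF gr2 xy(1)] by auto
        have "x' = x \<or> x' = a x" using q_eq[OF x V(1)] xy(2) by simp
        then show "z \<in> q ` {y. E2 x y}"
        proof
          assume "x' = x" then show ?thesis using xy by blast
        next
          assume "x' = a x"
          then have "E2 (a (a x)) (a y')" using xy(1) Aut_edge[OF gr2 aA] by simp
          then have "E2 x (a y')" using aax by simp
          moreover have "q (a y') = z" using qa xy(3) by simp
          ultimately show ?thesis by blast
        qed
      qed
    qed
    show ?thesis using inj img by (simp add: bij_betw_def)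
  qed
  show ?thesis unfolding covering_def using gr2 graph_E1n q_img E1n_q lb by blast
qed

lemma aCTq: "a \<in> CT V2 E2 q" unfolding CT_def using aA qa by simp
lemma idCTq: "id \<in> CT V2 E2 q" by (rule CT_id)

lemma CT_q: "CT V2 E2 q = {id, a}"
proof
  show "{id, a} \<subseteq> CT V2 E2 q" using aCTq idCTq by simp
  show "CT V2 E2 q \<subseteq> {id, a}"
  proof
    fix c assume c: "c \<in> CT V2 E2 q"
    obtain x0 where x0: "x0 \<in> V2" using V2ne by blast
    have cA: "c \<in> Aut V2 E2" and cq: "q (c x0) = q x0" using c x0 unfolding CT_def by auto
    have "c x0 = x0 \<or> c x0 = a x0" using q_eq[OF x0 Aut_mem[OF cA x0]] cq by simp
    then show "c \<in> {id, a}"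
    proof
      assume "c x0 = x0" then have "c = id" using CT_unique[OF cov_q c idCTq x0] by simp
      then show ?thesis by simp
    next
      assume "c x0 = a x0" then have "c = a" using CT_unique[OF cov_q c aCTq x0] by simp
      then show ?thesis by simp
    qed
  qed
qed

lemma a_ne_id: "a \<noteq> id"
proof
  assume "a = id"
  obtain x0 where x0: "x0 \<in> V2" using V2ne by blast
  then show False using afp[OF x0] \<open>a = id\<close> by simp
qed

lemma tc_q: "two_cover V2 E2 V1 E1n q"
proof -
  have r: "\<forall>x1\<in>V2. \<forall>x2\<in>V2. q x1 = q x2 \<longrightarrow> (\<exists>!c. c \<in> CT V2 E2 q \<and> c x1 = x2)"
  proof (intro ballI impI)
    fix x1 x2 assume x: "x1 \<in> V2" "x2 \<in> V2" "q x1 = q x2"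
    have "x2 = x1 \<or> x2 = a x1" using q_eq[OF x(1) x(2)] x(3) by simp
    then have ex: "\<exists>c. c \<in> CT V2 E2 q \<and> c x1 = x2" using aCTq idCTq by auto
    show "\<exists>!c. c \<in> CT V2 E2 q \<and> c x1 = x2"
    proof (rule ex_ex1I[OF ex])
      fix c d assume "c \<in> CT V2 E2 q \<and> c x1 = x2" "d \<in> CT V2 E2 q \<and> d x1 = x2"
      then show "c = d" using CT_unique[OF cov_q _ _ x(1)] by metis
    qed
  qed
  have "card (CT V2 E2 q) = 2" using CT_q a_ne_id by (simp add: eq_commute)
  then show ?thesis unfolding two_cover_def regular_covering_def using cov_q r by blast
qed

end


context chain2 begin

lemma p1n_img: "p1n ` V1 = V0"
proof -
  have "p1n ` V1 = p1n ` q ` V2" using q_img by simp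
  also have "\<dots> = (\<lambda>x. p1n (q x)) ` V2" by (simp add: image_image)
  also have "\<dots> = (\<lambda>x. p1 (p2 x)) ` V2" using p1n_q by (rule image_cong[OF refl])
  also have "\<dots> = p1 ` p2 ` V2" by (simp add: image_image)
  also have "\<dots> = V0" using img1 img2 by simp
  finally show ?thesis .
qed

lemma p1n_edge: "E1n u v \<Longrightarrow> E0 (p1n u) (p1n v)"
proof -
  assume "E1n u v"
  then obtain x y where xy: "E2 x y" "q x = u" "q y = v" unfolding E1n_def by blast
  have V: "x \<in> V2" "y \<in> V2" using graph_edge[OF gr2 xy(1)] by auto
  have "E0 (p1 (p2 x)) (p1 (p2 y))" using edge1[OF edge2[OF xy(1)]] .
  moreover have "p1n u = p1 (p2 x)" using p1n_q[OF V(1)] xy(2) by simp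
  moreover have "p1n v = p1 (p2 y)" using p1n_q[OF V(2)] xy(3) by simp
  ultimately show ?thesis by simp
qed

lemma cov_p1n: "covering V1 E1n V0 E0 p1n"
proof -
  have lb: "bij_betw p1n {v. E1n u v} {w. E0 (p1n u) w}" if u: "u \<in> V1" for u
  proof -
    obtain x where x: "x \<in> V2" "u = q x" using V1_q[OF u] by blast
    have b1: "bij_betw q {y. E2 x y} {z. E1n (q x) z}" using cov_q x(1) unfolding covering_def by blast
    have b2: "bij_betw p2 {y. E2 x y} {z. E1 (p2 x) z}" using cov2 x(1) unfolding covering_def by blast
    have b3: "bij_betw p1 {z. E1 (p2 x) z} {w. E0 (p1 (p2 x)) w}" using cov1 p2mem[OF x(1)] unfolding covering_def by blast
    have b4: "bij_betw (p1 \<circ> p2) {y. E2 x y} {w. E0 (p1 (p2 x)) w}" using bij_betw_trans[OF b2 b3] .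
    have f: "\<forall>y\<in>{y. E2 x y}. p1n (q y) = (p1 \<circ> p2) y"
    proof
      fix y assume "y \<in> {y. E2 x y}" then have "y \<in> V2" using graph_edge[OF gr2] by auto
      then show "p1n (q y) = (p1 \<circ> p2) y" using p1n_q by simp
    qed
    have "bij_betw p1n {z. E1n (q x) z} {w. E0 (p1 (p2 x)) w}" by (rule bij_factor[OF b1 b4 f])
    then show ?thesis using x p1n_q by simp
  qed
  show ?thesis unfolding covering_def using graph_E1n gr0 p1n_img p1n_edge lb by blast
qed

definition "d2 = desc c2"

lemma d2A: "d2 \<in> Aut V1 E1n" unfolding d2_def using desc_Aut[OF c2_Ac] .

lemma d2q: "x \<in> V2 \<Longrightarrow> d2 (q x) = q (c2 x)" unfolding d2_def using desc_q[OF c2_Ac] .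

lemma d2CT: "d2 \<in> CT V1 E1n p1n"
proof -
  have "\<forall>u\<in>V1. p1n (d2 u) = p1n u"
  proof
    fix u assume "u \<in> V1"
    then obtain x where x: "x \<in> V2" "u = q x" by (rule V1_q)
    have "p1n (d2 u) = p1 (p2 (c2 x))" using d2q x p1n_q c2mem by simp
    also have "\<dots> = p1n u" using c2p x p1n_q by simp
    finally show "p1n (d2 u) = p1n u" .
  qed
  then show ?thesis unfolding CT_def using d2A by simp
qed

lemma d2fp: assumes u: "u \<in> V1" shows "d2 u \<noteq> u"
proof
  assume e: "d2 u = u"
  obtain x where x: "x \<in> V2" "u = q x" using V1_q[OF u] by blast
  have "q (c2 x) = q x" using e x d2q by simp
  then have "c2 x = x \<or> c2 x = a x" using q_eq[OF x(1) c2mem[OF x(1)]] by simp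
  then show False
  proof
    assume "c2 x = x" then show False using c2fp x by simp
  next
    assume "c2 x = a x"
    then have "p2 x = c1 (p2 x)" using c2p[OF x(1)] ap[OF x(1)] by simp
    then show False using c1fp[OF p2mem[OF x(1)]] by simp
  qed
qed

lemma d2_ne_id: "d2 \<noteq> id"
proof
  assume "d2 = id"
  obtain u where u: "u \<in> V1" using V1ne by blast
  then show False using d2fp[OF u] \<open>d2 = id\<close> by simp
qed

lemma fib_p1n: assumes u: "u \<in> V1" and v: "v \<in> V1" and e: "p1n u = p1n v"
  shows "v = u \<or> v = d2 u"
proof -
  obtain x where x: "x \<in> V2" "u = q x" using V1_q[OF u] by blast
  obtain y where y: "y \<in> V2" "v = q y" using V1_q[OF v] by blast
  have "p1n u = p1 (p2 x)" using p1n_q[OF x(1)] x(2) by simp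
  moreover have "p1n v = p1 (p2 y)" using p1n_q[OF y(1)] y(2) by simp
  ultimately have "p1 (p2 x) = p1 (p2 y)" using e by simp
  then have c: "y = x \<or> y = c2 x \<or> y = a x \<or> y = a (c2 x)" using fibre_p[OF x(1) y(1)] by blast
  have du: "d2 u = q (c2 x)" using x d2q by simp
  show ?thesis
  proof (cases "y = x \<or> y = a x")
    case True
    then have "q y = q x" using qa by auto
    then show ?thesis using x y by simp
  next
    case False
    then have "y = c2 x \<or> y = a (c2 x)" using c by blast
    then have "q y = q (c2 x)" using qa by auto
    then show ?thesis using du y by simp
  qed
qed

lemma idCT1n: "id \<in> CT V1 E1n p1n" by (rule CT_id)

lemma CT_p1n: "CT V1 E1n p1n = {id, d2}"
proof
  show "{id, d2} \<subseteq> CT V1 E1n p1n" using d2CT idCT1n by simp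
  show "CT V1 E1n p1n \<subseteq> {id, d2}"
  proof
    fix c assume c: "c \<in> CT V1 E1n p1n"
    obtain u0 where u0: "u0 \<in> V1" using V1ne by blast
    have cA: "c \<in> Aut V1 E1n" and cp: "p1n (c u0) = p1n u0" using c u0 unfolding CT_def by auto
    have "c u0 = u0 \<or> c u0 = d2 u0" using fib_p1n[OF u0 Aut_mem[OF cA u0] cp[symmetric]] .
    then show "c \<in> {id, d2}"
    proof
      assume "c u0 = u0" then have "c = id" using CT_unique[OF cov_p1n c idCT1n u0] by simp
      then show ?thesis by simp
    next
      assume "c u0 = d2 u0" then have "c = d2" using CT_unique[OF cov_p1n c d2CT u0] by simp
      then show ?thesis by simp
    qed
  qed
qed

lemma tc_p1n: "two_cover V1 E1n V0 E0 p1n"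
proof -
  have r: "\<forall>u1\<in>V1. \<forall>u2\<in>V1. p1n u1 = p1n u2 \<longrightarrow> (\<exists>!c. c \<in> CT V1 E1n p1n \<and> c u1 = u2)"
  proof (intro ballI impI)
    fix u1 u2 assume u: "u1 \<in> V1" "u2 \<in> V1" "p1n u1 = p1n u2"
    have "u2 = u1 \<or> u2 = d2 u1" using fib_p1n[OF u] .
    then have ex: "\<exists>c. c \<in> CT V1 E1n p1n \<and> c u1 = u2"
    proof
      assume "u2 = u1" then show ?thesis using idCT1n by (intro exI[of _ id]) simp
    next
      assume "u2 = d2 u1" then show ?thesis using d2CT by (intro exI[of _ d2]) simp
    qed
    show "\<exists>!c. c \<in> CT V1 E1n p1n \<and> c u1 = u2"
    proof (rule ex_ex1I[OF ex])
      fix c d assume "c \<in> CT V1 E1n p1n \<and> c u1 = u2" "d \<in> CT V1 E1n p1n \<and> d u1 = u2"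
      then show "c = d" using CT_unique[OF cov_p1n _ _ u(1)] by metis
    qed
  qed
  have ne: "id \<noteq> d2" using d2_ne_id by metis
  have "card (CT V1 E1n p1n) = 2" unfolding CT_p1n using ne by simp
  then show ?thesis unfolding two_cover_def regular_covering_def using cov_p1n r by blast
qed

end


context chain2 begin

definition "G1n = lifted_group V1 E1n p1n G"

lemma desc_inv_eq: "h \<in> Ac \<Longrightarrow> inv (desc h) = desc (inv h)"
  using desc_inv by (blast intro: inv_unique_comp)

lemma lift_chain:
  assumes h: "h \<in> Ac" and l2: "is_lift V2 p2 g1 h" and l1: "is_lift V1 p1 g g1"
  shows "is_lift V1 p1n g (desc h)"
  unfolding is_lift_def
proof
  fix u assume u: "u \<in> V1"
  obtain x where x: "x \<in> V2" "u = q x" using V1_q[OF u] by blast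
  have hx: "h x \<in> V2" using Ac_mem[OF h x(1)] .
  have "g (p1n u) = g (p1 (p2 x))" using p1n_q[OF x(1)] x(2) by simp
  also have "\<dots> = p1 (g1 (p2 x))" using l1 p2mem[OF x(1)] unfolding is_lift_def by blast
  also have "\<dots> = p1 (p2 (h x))" using l2 x(1) unfolding is_lift_def by simp
  also have "\<dots> = p1n (q (h x))" using p1n_q[OF hx] by simp
  also have "\<dots> = p1n (desc h u)" using desc_q[OF h x(1)] x(2) by simp
  finally show "g (p1n u) = p1n (desc h u)" .
qed

lemma G2_lift: assumes h: "h \<in> G2"
  obtains g1 g where "g1 \<in> G1" "g \<in> G" "is_lift V2 p2 g1 h" "is_lift V1 p1 g g1"
proof -
  obtain g1 where g1: "g1 \<in> G1" "is_lift V2 p2 g1 h" using h G2def by (auto elim: lifted_groupE)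
  obtain g where g: "g \<in> G" "is_lift V1 p1 g g1" using g1(1) G1def by (auto elim: lifted_groupE)
  show ?thesis using that g1 g by blast
qed

lemma desc_lift: assumes h: "h \<in> G2" shows "desc h \<in> G1n"
proof -
  obtain g1 g where gg: "g1 \<in> G1" "g \<in> G" "is_lift V2 p2 g1 h" "is_lift V1 p1 g g1"
    using G2_lift[OF h] by blast
  have "is_lift V1 p1n g (desc h)" using lift_chain[OF G2_Ac[OF h] gg(3) gg(4)] .
  then show ?thesis unfolding G1n_def using desc_Aut[OF G2_Ac[OF h]] gg(2) by (rule_tac lifted_groupI) auto
qed

lemma lift_ex: assumes g: "g \<in> G"
  obtains h where "h \<in> G2" "is_lift V1 p1n g (desc h)"
proof -
  obtain g1 where g1: "g1 \<in> Aut V1 E1" "is_lift V1 p1 g g1" using al1 g unfolding all_lift_def by blast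
  have g1G: "g1 \<in> G1" using G1def g1 g by (auto intro: lifted_groupI)
  obtain h where h: "h \<in> Aut V2 E2" "is_lift V2 p2 g1 h" using al2 g1G unfolding all_lift_def by blast
  have hG: "h \<in> G2" using G2def h g1G by (auto intro: lifted_groupI)
  show ?thesis using that[OF hG lift_chain[OF G2_Ac[OF hG] h(2) g1(2)]] .
qed

lemma d2_desc: "d2 = desc c2" by (simp add: d2_def)

lemma G1n_desc: assumes f: "f \<in> G1n" shows "\<exists>h\<in>G2. f = desc h"
proof -
  obtain g where fg: "f \<in> Aut V1 E1n" "g \<in> G" "is_lift V1 p1n g f"
    using f unfolding G1n_def by (auto elim: lifted_groupE)
  obtain h where h: "h \<in> G2" "is_lift V1 p1n g (desc h)" using lift_ex[OF fg(2)] by blast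
  have hAc: "h \<in> Ac" using G2_Ac[OF h(1)] .
  have dA: "desc h \<in> Aut V1 E1n" using desc_Aut[OF hAc] .
  have pp: "\<forall>u\<in>V1. p1n (f u) = p1n (desc h u)"
    using fg(3) h(2) unfolding is_lift_def by auto
  obtain u0 where u0: "u0 \<in> V1" using V1ne by blast
  have m: "desc h u0 \<in> V1" "f u0 \<in> V1" using desc_mem[OF hAc u0] Aut_mem[OF fg(1) u0] by auto
  have "f u0 = desc h u0 \<or> f u0 = d2 (desc h u0)"
    using fib_p1n[OF m] pp u0 by simp
  then show ?thesis
  proof
    assume "f u0 = desc h u0"
    then have "f = desc h" by (rule ULL[OF cov_p1n fg(1) dA pp u0])
    then show ?thesis using h(1) by blast
  next
    assume e: "f u0 = d2 (desc h u0)"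
    have dA2: "d2 \<circ> desc h \<in> Aut V1 E1n" using Aut_comp[OF d2A dA] .
    have pp2: "\<forall>u\<in>V1. p1n (f u) = p1n ((d2 \<circ> desc h) u)"
    proof
      fix u assume u: "u \<in> V1"
      have "p1n (d2 (desc h u)) = p1n (desc h u)" using d2CT desc_mem[OF hAc u] unfolding CT_def by blast
      then show "p1n (f u) = p1n ((d2 \<circ> desc h) u)" using pp u by simp
    qed
    have "f = d2 \<circ> desc h" by (rule ULL[OF cov_p1n fg(1) dA2 pp2 u0]) (simp add: e)
    also have "\<dots> = desc (c2 \<circ> h)" using desc_comp[OF c2_Ac hAc] d2_desc by simp
    finally show ?thesis using G2comp[OF c2G2 h(1)] by blast
  qed
qed

lemma G1n_eq: "G1n = desc ` G2" using G1n_desc desc_lift by blast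

lemma CT2_G2: "c \<in> CT V2 E2 p2 \<Longrightarrow> c \<in> G2" using CT2 c2G2 G2id by auto
lemma CT1n_G1n: "c \<in> CT V1 E1n p1n \<Longrightarrow> c \<in> G1n"
  using CT_p1n desc_lift[OF c2G2] desc_lift[OF G2id] desc_id d2_desc by auto

lemma autG1n: "aut_group V1 E1n G1n" unfolding G1n_def by (rule lifted_group_aut[OF autG])
lemma G1n_comp: "f \<in> G1n \<Longrightarrow> g \<in> G1n \<Longrightarrow> f \<circ> g \<in> G1n" using autG1n by (simp add: aut_group_def)

lemma d2d2: "d2 \<circ> d2 = id"
  using desc_comp[OF c2_Ac c2_Ac] c2c2 desc_id d2_desc by simp

lemma H_Ac: "h \<in> H \<Longrightarrow> h \<in> Ac" using HG2 G2_Ac by blast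

lemma complK: "complement V1 E1n p1n G (desc ` H)"
proof -
  have ag: "aut_group V1 E1n (desc ` H)"
    unfolding aut_group_def
  proof (intro conjI ballI)
    show "desc ` H \<subseteq> Aut V1 E1n" using desc_Aut H_Ac by blast
    show "id \<in> desc ` H" using Hid desc_id by (metis image_eqI)
  next
    fix f g assume "f \<in> desc ` H" "g \<in> desc ` H"
    then obtain h k where hk: "h \<in> H" "k \<in> H" "f = desc h" "g = desc k" by blast
    then have "f \<circ> g = desc (h \<circ> k)" using desc_comp H_Ac by simp
    then show "f \<circ> g \<in> desc ` H" using Hcomp[OF hk(1) hk(2)] by blast
  next
    fix f assume "f \<in> desc ` H"
    then obtain h where h: "h \<in> H" "f = desc h" by blast
    then have "inv f = desc (inv h)" using desc_inv_eq H_Ac by simp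
    then show "inv f \<in> desc ` H" using Hinv[OF h(1)] by blast
  qed
  have sub: "desc ` H \<subseteq> G1n" using desc_lift HG2 by blast
  have int: "desc ` H \<inter> CT V1 E1n p1n = {id}"
  proof
    show "{id} \<subseteq> desc ` H \<inter> CT V1 E1n p1n" using Hid desc_id idCT1n by (metis Int_iff empty_subsetI image_eqI insert_subset)
    show "desc ` H \<inter> CT V1 E1n p1n \<subseteq> {id}"
    proof
      fix f assume "f \<in> desc ` H \<inter> CT V1 E1n p1n"
      then obtain h where h: "h \<in> H" "f = desc h" "f \<in> CT V1 E1n p1n" by blast
      have "f = id \<or> f = d2" using h(3) CT_p1n by simp
      moreover have "f \<noteq> d2"
      proof
        assume fd: "f = d2"
        have hAc: "h \<in> Ac" using H_Ac[OF h(1)] .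
        have hA: "h \<in> Aut V2 E2" using AcD(1)[OF hAc] .
        have qq: "\<forall>x\<in>V2. q (h x) = q (c2 x)"
          using desc_q[OF hAc] d2q h(2) fd by (metis)
        obtain x0 where x0: "x0 \<in> V2" using V2ne by blast
        have "h x0 = c2 x0 \<or> h x0 = a (c2 x0)"
          using q_eq[OF c2mem[OF x0] Ac_mem[OF hAc x0]] qq x0 by simp
        then show False
        proof
          assume "h x0 = c2 x0"
          then have "h = c2" using ULL[OF cov_q hA c2A qq x0] by simp
          then show False using h(1) c2H by simp
        next
          assume e: "h x0 = a (c2 x0)"
          have acA: "a \<circ> c2 \<in> Aut V2 E2" using Aut_comp[OF aA c2A] .
          have qq2: "\<forall>x\<in>V2. q (h x) = q ((a \<circ> c2) x)" using qq qa by simp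
          have "h = a \<circ> c2" by (rule ULL[OF cov_q hA acA qq2 x0]) (simp add: e)
          then have "a \<circ> h = c2" using aa by (simp add: comp_assoc[symmetric])
          moreover have "a \<circ> h \<in> H" using Hcomp[OF aH h(1)] .
          ultimately show False using c2H by simp
        qed
      qed
      ultimately show "f \<in> {id}" by simp
    qed
  qed
  have prod: "{k \<circ> c | k c. k \<in> desc ` H \<and> c \<in> CT V1 E1n p1n} = G1n"
  proof
    show "{k \<circ> c | k c. k \<in> desc ` H \<and> c \<in> CT V1 E1n p1n} \<subseteq> G1n"
      using sub CT1n_G1n G1n_comp by blast
    show "G1n \<subseteq> {k \<circ> c | k c. k \<in> desc ` H \<and> c \<in> CT V1 E1n p1n}"
    proof
      fix f assume "f \<in> G1n"
      then obtain h' where h': "h' \<in> G2" "f = desc h'" using G1n_desc by blast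
      then obtain h c where hc: "h' = h \<circ> c" "h \<in> H" "c \<in> CT V2 E2 p2" using Hprod by blast
      have cAc: "c \<in> Ac" using CT2 hc(3) Ac_id c2_Ac by auto
      have f2: "f = desc h \<circ> desc c" using h'(2) hc desc_comp[OF H_Ac[OF hc(2)] cAc] by simp
      have "desc c \<in> CT V1 E1n p1n" using hc(3) CT2 desc_id idCT1n d2CT d2_desc by auto
      then show "f \<in> {k \<circ> c | k c. k \<in> desc ` H \<and> c \<in> CT V1 E1n p1n}" using f2 hc(2) by blast
    qed
  qed
  show ?thesis unfolding complement_def using ag sub int prod G1n_def by simp
qed

end


context chain2 begin

lemma desc_a: "desc a = id"
proof
  fix u show "desc a u = id u"
  proof (cases "u \<in> V1")
    case True
    have "desc a u = q (a (rep u))" unfolding desc_def using True by simp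
    also have "\<dots> = u" using qa rep(2)[OF True] by simp
    finally show ?thesis by simp
  qed (simp add: desc_def)
qed

lemma preimage:
  assumes K': "complement V1 E1n p1n G K'"
  shows "complement V2 E2 p2 G1 {h \<in> G2. desc h \<in> K'}"
proof -
  have agK: "aut_group V1 E1n K'" and subK: "K' \<subseteq> G1n" and intK: "K' \<inter> CT V1 E1n p1n = {id}"
    and prodK: "{k \<circ> c | k c. k \<in> K' \<and> c \<in> CT V1 E1n p1n} = G1n"
    using K' unfolding complement_def G1n_def by auto
  have Kid: "id \<in> K'" and Kc: "\<And>f g. f \<in> K' \<Longrightarrow> g \<in> K' \<Longrightarrow> f \<circ> g \<in> K'"
    and Ki: "\<And>f. f \<in> K' \<Longrightarrow> inv f \<in> K'" using agK unfolding aut_group_def by auto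
  let ?P = "{h \<in> G2. desc h \<in> K'}"
  have ag: "aut_group V2 E2 ?P"
    unfolding aut_group_def
  proof (intro conjI ballI)
    show "?P \<subseteq> Aut V2 E2" using G2A by blast
    show "id \<in> ?P" using G2id desc_id Kid by simp
  next
    fix f g assume f: "f \<in> ?P" and g: "g \<in> ?P"
    then have "desc (f \<circ> g) = desc f \<circ> desc g" using desc_comp G2_Ac by simp
    then show "f \<circ> g \<in> ?P" using f g G2comp Kc by simp
  next
    fix f assume f: "f \<in> ?P"
    then have "desc (inv f) = inv (desc f)" using desc_inv_eq G2_Ac by simp
    then show "inv f \<in> ?P" using f G2inv Ki by simp
  qed
  have sub: "?P \<subseteq> lifted_group V2 E2 p2 G1" using G2def by blast
  have int: "?P \<inter> CT V2 E2 p2 = {id}"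
  proof
    show "{id} \<subseteq> ?P \<inter> CT V2 E2 p2" using G2id desc_id Kid CT2 by simp
    show "?P \<inter> CT V2 E2 p2 \<subseteq> {id}"
    proof
      fix c assume c: "c \<in> ?P \<inter> CT V2 E2 p2"
      have "c = id \<or> c = c2" using c CT2 by auto
      moreover have "c \<noteq> c2"
      proof
        assume "c = c2"
        then have "d2 \<in> K'" using c d2_desc by simp
        then have "d2 \<in> K' \<inter> CT V1 E1n p1n" using d2CT by simp
        then show False using intK d2_ne_id by simp
      qed
      ultimately show "c \<in> {id}" by simp
    qed
  qed
  have prod: "{h \<circ> c | h c. h \<in> ?P \<and> c \<in> CT V2 E2 p2} = lifted_group V2 E2 p2 G1"
  proof
    show "{h \<circ> c | h c. h \<in> ?P \<and> c \<in> CT V2 E2 p2} \<subseteq> lifted_group V2 E2 p2 G1"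
      using CT2_G2 G2comp G2def by blast
    show "lifted_group V2 E2 p2 G1 \<subseteq> {h \<circ> c | h c. h \<in> ?P \<and> c \<in> CT V2 E2 p2}"
    proof
      fix h' assume "h' \<in> lifted_group V2 E2 p2 G1"
      then have h': "h' \<in> G2" using G2def by simp
      then have "desc h' \<in> G1n" using desc_lift by simp
      then obtain k c where kc: "desc h' = k \<circ> c" "k \<in> K'" "c \<in> CT V1 E1n p1n" using prodK by blast
      have "c = id \<or> c = d2" using kc(3) CT_p1n by simp
      then show "h' \<in> {h \<circ> c | h c. h \<in> ?P \<and> c \<in> CT V2 E2 p2}"
      proof
        assume "c = id"
        then have "h' \<in> ?P" using kc h' by simp
        moreover have "h' = h' \<circ> id" "id \<in> CT V2 E2 p2" using CT2 by auto
        ultimately show ?thesis by blast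
      next
        assume cd: "c = d2"
        have hc2: "h' \<circ> c2 \<in> G2" using G2comp[OF h' c2G2] .
        have "desc (h' \<circ> c2) = desc h' \<circ> d2" using desc_comp[OF G2_Ac[OF h'] c2_Ac] d2_desc by simp
        also have "\<dots> = k \<circ> (d2 \<circ> d2)" using kc(1) cd by (simp add: comp_assoc)
        also have "\<dots> = k" using d2d2 by simp
        finally have "h' \<circ> c2 \<in> ?P" using hc2 kc(2) by simp
        moreover have "h' = (h' \<circ> c2) \<circ> c2" using c2c2 by (simp add: comp_assoc)
        moreover have "c2 \<in> CT V2 E2 p2" using CT2 by simp
        ultimately show ?thesis by blast
      qed
    qed
  qed
  show ?thesis unfolding complement_def using ag sub int prod by simp
qed

end


context chain2 begin

lemma main_adm: "admissible2 V2 E2 q V1 E1n p1n V0 E0 G G1n (lifted_group V2 E2 q G1n)"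
proof -
  have al1n: "all_lift V1 E1n p1n G"
    unfolding all_lift_def
  proof
    fix g assume "g \<in> G"
    then obtain h where h: "h \<in> G2" "is_lift V1 p1n g (desc h)" by (rule lift_ex)
    then show "\<exists>f\<in>Aut V1 E1n. is_lift V1 p1n g f" using desc_Aut[OF G2_Ac[OF h(1)]] by blast
  qed
  have al2n: "all_lift V2 E2 q G1n"
    unfolding all_lift_def
  proof
    fix f assume "f \<in> G1n"
    then obtain h where h: "h \<in> G2" "f = desc h" using G1n_desc by blast
    have "is_lift V2 q f h" unfolding is_lift_def using desc_q[OF G2_Ac[OF h(1)]] h(2) by simp
    then show "\<exists>h\<in>Aut V2 E2. is_lift V2 q f h" using h(1) G2A by blast
  qed
  show ?thesis unfolding admissible2_def using tc_p1n tc_q autG al1n al2n G1n_def by simp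
qed

lemma main_split: "split V1 E1n p1n G"
  unfolding split_def using complK by blast

lemma main_trans:
  assumes st: "split_transitive V2 E2 p2 G1"
  shows "split_transitive V1 E1n p1n G"
  unfolding split_transitive_def
proof (intro conjI allI impI)
  show "split V1 E1n p1n G" by (rule main_split)
  fix K' assume K': "complement V1 E1n p1n G K'"
  have P: "complement V2 E2 p2 G1 {h \<in> G2. desc h \<in> K'}" by (rule preimage[OF K'])
  then have tr: "transitive_on V2 {h \<in> G2. desc h \<in> K'}" using st unfolding split_transitive_def by blast
  show "transitive_on V1 K'"
    unfolding transitive_on_def
  proof (intro ballI)
    fix u v assume u: "u \<in> V1" and v: "v \<in> V1"
    obtain x where x: "x \<in> V2" "u = q x" using V1_q[OF u] by blast
    obtain y where y: "y \<in> V2" "v = q y" using V1_q[OF v] by blast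
    obtain h where h: "h \<in> G2" "desc h \<in> K'" "h x = y" using tr x y unfolding transitive_on_def by blast
    have "desc h u = v" using desc_q[OF G2_Ac[OF h(1)] x(1)] x y h(3) by simp
    then show "\<exists>k\<in>K'. k u = v" using h(2) by blast
  qed
qed

lemma card1_unique: "card A = 1 \<Longrightarrow> x \<in> A \<Longrightarrow> y \<in> A \<Longrightarrow> x = y"
  using card_1_singleton_iff by (metis One_nat_def singletonD)

lemma card1_ex: "card A = 1 \<Longrightarrow> \<exists>x. x \<in> A"
  using card_1_singleton_iff by (metis One_nat_def insertI1)

lemma card1_I: "x \<in> A \<Longrightarrow> (\<And>y. y \<in> A \<Longrightarrow> y = x) \<Longrightarrow> card A = 1"
proof -
  assume "x \<in> A" "\<And>y. y \<in> A \<Longrightarrow> y = x"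
  then have "A = {x}" by blast
  then show "card A = 1" by simp
qed

lemma main_sect:
  assumes ss: "split_sectional V2 E2 V1 p2 G1"
  shows "split_sectional V1 E1n V0 p1n G"
  unfolding split_sectional_def
proof (intro conjI allI impI)
  show "split V1 E1n p1n G" by (rule main_split)
  fix K' assume K': "complement V1 E1n p1n G K'"
  have P: "complement V2 E2 p2 G1 {h \<in> G2. desc h \<in> K'}" by (rule preimage[OF K'])
  then have "sectional V2 V1 p2 {h \<in> G2. desc h \<in> K'}" using ss unfolding split_sectional_def by blast
  then obtain S where S: "is_section V2 V1 p2 S" and inv: "\<forall>h\<in>{h \<in> G2. desc h \<in> K'}. h ` S = S"
    unfolding sectional_def by blast
  have SV: "S \<subseteq> V2" and Sc: "\<And>u. u \<in> V1 \<Longrightarrow> card (S \<inter> {x\<in>V2. p2 x = u}) = 1"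
    using S unfolding is_section_def by auto
  have Kid: "id \<in> K'" using K' unfolding complement_def aut_group_def by auto
  have "a \<in> {h \<in> G2. desc h \<in> K'}" using aG2 desc_a Kid by simp
  then have aS: "a ` S = S" using inv by blast
  have aSm: "\<And>s. s \<in> S \<Longrightarrow> a s \<in> S" using aS by blast
  have Suniq: "\<And>s s'. s \<in> S \<Longrightarrow> s' \<in> S \<Longrightarrow> p2 s = p2 s' \<Longrightarrow> s' = s"
  proof -
    fix s s' assume s: "s \<in> S" "s' \<in> S" "p2 s = p2 s'"
    have sv: "s \<in> V2" "s' \<in> V2" using SV s by auto
    have "p2 s \<in> V1" using p2mem sv(1) .
    then have c: "card (S \<inter> {x\<in>V2. p2 x = p2 s}) = 1" by (rule Sc)
    have "s \<in> S \<inter> {x\<in>V2. p2 x = p2 s}" "s' \<in> S \<inter> {x\<in>V2. p2 x = p2 s}" using s sv by auto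
    then show "s' = s" using card1_unique[OF c] by metis
  qed
  have sec: "is_section V1 V0 p1n (q ` S)"
    unfolding is_section_def
  proof (intro conjI ballI)
    show "q ` S \<subseteq> V1" using SV q_mem by blast
    fix w assume w: "w \<in> V0"
    have "w \<in> p1 ` p2 ` V2" using w img1 img2 by simp
    then obtain x where x: "x \<in> V2" "w = p1 (p2 x)" by blast
    obtain s where s: "s \<in> S \<inter> {y\<in>V2. p2 y = p2 x}" using card1_ex[OF Sc[OF p2mem[OF x(1)]]] by blast
    have sV: "s \<in> V2" "s \<in> S" "p2 s = p2 x" using s by auto
    show "card (q ` S \<inter> {u\<in>V1. p1n u = w}) = 1"
    proof (rule card1_I[of "q s"])
      have "p1n (q s) = w" using p1n_q[OF sV(1)] sV(3) x(2) by simp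
      moreover have "q s \<in> V1" using q_mem[OF sV(1)] .
      moreover have "q s \<in> q ` S" using sV(2) by (rule imageI)
      ultimately show "q s \<in> q ` S \<inter> {u\<in>V1. p1n u = w}" by simp
    next
      fix z assume z: "z \<in> q ` S \<inter> {u\<in>V1. p1n u = w}"
      then obtain s' where s': "s' \<in> S" "z = q s'" "p1n z = w" by blast
      have s'V: "s' \<in> V2" using s' SV by blast
      have "p1n (q s') = p1 (p2 s')" using p1n_q[OF s'V] .
      then have "p1 (p2 s') = w" using s'(2,3) by simp
      then have "p1 (p2 s) = p1 (p2 s')" using x(2) sV(3) by simp
      then have c: "s' = s \<or> s' = c2 s \<or> s' = a s \<or> s' = a (c2 s)" using fibre_p[OF sV(1) s'V] by blast
      have "q s' = q s"
      proof (cases "s' = s \<or> s' = a s")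
        case True then show ?thesis
        proof
          assume "s' = s" then show ?thesis by simp
        next
          assume "s' = a s" then show ?thesis using qa[of s] by simp
        qed
      next
        case False
        then have c': "s' = c2 s \<or> s' = a (c2 s)" using c by blast
        then show ?thesis
        proof
          assume e: "s' = c2 s"
          then have "p2 s = p2 s'" using c2p[OF sV(1)] by simp
          then have "s' = s" using Suniq[OF sV(2) s'(1)] by simp
          then show ?thesis by simp
        next
          assume e: "s' = a (c2 s)"
          then have "a s' = c2 s" using aax by simp
          then have "c2 s \<in> S" using aSm[OF s'(1)] by simp
          moreover have "p2 s = p2 (c2 s)" using c2p[OF sV(1)] by simp
          ultimately have "c2 s = s" by (rule Suniq[OF sV(2)])
          then show ?thesis using c2fp[OF sV(1)] by simp
        qed
      qed
      then show "z = q s" using s'(2) by simp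
    qed
  qed
  have kinv: "\<forall>k\<in>K'. k ` (q ` S) = q ` S"
  proof
    fix k assume k: "k \<in> K'"
    have "k \<in> G1n" using K' k unfolding complement_def G1n_def by blast
    then obtain h where h: "h \<in> G2" "k = desc h" using G1n_desc by blast
    have "h \<in> {h \<in> G2. desc h \<in> K'}" using h k by simp
    then have hS: "h ` S = S" using inv by blast
    have "k ` (q ` S) = (\<lambda>s. desc h (q s)) ` S" using h(2) by (simp add: image_image)
    also have "\<dots> = (\<lambda>s. q (h s)) ` S"
    proof (rule image_cong[OF refl])
      fix s assume "s \<in> S" then have "s \<in> V2" using SV by blast
      then show "desc h (q s) = q (h s)" by (rule desc_q[OF G2_Ac[OF h(1)]])
    qed
    also have "\<dots> = q ` (h ` S)" by (simp add: image_image)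
    finally show "k ` (q ` S) = q ` S" using hS by simp
  qed
  show "sectional V1 V0 p1n K'" unfolding sectional_def using sec kinv by blast
qed

end

theorem lemma5p2:
  fixes V0 :: "'a set" and E0 :: "'a \<Rightarrow> 'a \<Rightarrow> bool"
    and V1 :: "'b set" and E1 :: "'b \<Rightarrow> 'b \<Rightarrow> bool" and p1 :: "'b \<Rightarrow> 'a"
    and V2 :: "'c set" and E2 :: "'c \<Rightarrow> 'c \<Rightarrow> bool" and p2 :: "'c \<Rightarrow> 'b"
    and G :: "('a \<Rightarrow> 'a) set" and G1 :: "('b \<Rightarrow> 'b) set" and G2 :: "('c \<Rightarrow> 'c) set"
  assumes "graph V0 E0"
    and "arc_transitive V0 E0 G"
    and "admissible2 V2 E2 p2 V1 E1 p1 V0 E0 G G1 G2"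
  shows "(split_transitive V2 E2 p2 G1 \<longrightarrow>
           (\<exists>(V1' :: 'b set) E1' p2' p1' G1' G2'.
              admissible2 V2 E2 p2' V1' E1' p1' V0 E0 G G1' G2' \<and>
              split_transitive V1' E1' p1' G)) \<and>
         (split_sectional V2 E2 V1 p2 G1 \<longrightarrow>
           (\<exists>(V1' :: 'b set) E1' p2' p1' G1' G2'.
              admissible2 V2 E2 p2' V1' E1' p1' V0 E0 G G1' G2' \<and>
              split_sectional V1' E1' V0 p1' G))"
proof (intro conjI impI)
  assume st: "split_transitive V2 E2 p2 G1"
  then obtain H where H: "complement V2 E2 p2 G1 H" unfolding split_transitive_def split_def by blast
  interpret C: chain2 V0 E0 V1 E1 p1 V2 E2 p2 G G1 G2 H using assms(3) H by unfold_locales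
  show "\<exists>(V1' :: 'b set) E1' p2' p1' G1' G2'.
              admissible2 V2 E2 p2' V1' E1' p1' V0 E0 G G1' G2' \<and>
              split_transitive V1' E1' p1' G"
    using C.main_adm C.main_trans[OF st] by blast
next
  assume ss: "split_sectional V2 E2 V1 p2 G1"
  then obtain H where H: "complement V2 E2 p2 G1 H" unfolding split_sectional_def split_def by blast
  interpret C: chain2 V0 E0 V1 E1 p1 V2 E2 p2 G G1 G2 H using assms(3) H by unfold_locales
  show "\<exists>(V1' :: 'b set) E1' p2' p1' G1' G2'.
              admissible2 V2 E2 p2' V1' E1' p1' V0 E0 G G1' G2' \<and>
              split_sectional V1' E1' V0 p1' G"
    using C.main_adm C.main_sect[OF ss] by blast
qed


end
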